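(* In the half-line setting, assume $r_j=0$ for all $j\ge0$ and $C_R<\infty$ (positive recurrence). Let $\pi$ be as defined below. Then for every $j\ge0$, every unit vector $\Psi_0=\sum_{k\ge0:|k-j|=1}\alpha_k\delta_{(k,j)}$ and every $i\ge0$, $$\overline{\mu}^{(\Psi_0)}_\infty(i)\ \ge\ 2\,|\langle a_j,\Psi_0\rangle|^2\,\pi(i)\,\pi(j).$$
   Context: Half-line setting: $V=\mathbb{Z}_+$, parameters $p_j,q_j,r_j\ge0$ with $p_j+q_j+r_j=1$, $q_0=0$, $p_j>0$ ($j\ge0$), $q_j>0$ ($j\ge1$); here $r_j=0$, so there are no self loops. Arcs: $|j;R\rangle=\delta_{(j+1,j)}$ ($j\ge0$), $|j;L\rangle=\delta_{(j-1,j)}$ ($j\ge1$), arc $(u,v)$ going from $v$ to $u$. Shift $S$: $|j;R\rangle\leftrightarrow|j+1;L\rangle$. $a_j=\sqrt{q_j}|j;L\rangle+\sqrt{p_j}|j;R\rangle$. $\Pi_A$ is the orthogonal projection onto the closed span of $\{a_j\}$, $C=2\Pi_A-I$, $U=SC$. $P(X_t=i)=\sum_J|\langle i;J|U^t\Psi_0\rangle|^2$ over arcs out of $i$; $\overline{\mu}^{(\Psi_0)}_\infty(i)=\lim_{T\to\infty}\frac1T\sum_{t=0}^{T-1}P(X_t=i)$. $C_R=\sum_{j\ge1}\frac{p_0\cdots p_{j-1}}{q_1\cdots q_j}$ and $\pi(j)=\frac1{1+C_R}\{\delta_0(j)+(1-\delta_0(j))\frac{p_0\cdots p_{j-1}}{q_1\cdots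 q_j}\}$. *)

theory Defs
  imports "HOL-Analysis.Analysis"
begin

text \<open>The pair (j, True) encodes |j;R> = delta_(j+1,j)
  (arc out of j towards j+1), the pair (j, False) encodes |j;L> = delta_(j-1,j)
  (arc out of j towards j-1), which exists only for j >= 1.\<close>

type_synonym arc = "nat \<times> bool"
type_synonym qstate = "arc \<Rightarrow> complex"

definition arcs :: "arc set" where
  "arcs = {(j, b). b \<or> 1 \<le> j}"

definition is_ell2 :: "qstate \<Rightarrow> bool" where
  "is_ell2 f \<longleftrightarrow> (\<forall>x. x \<notin> arcs \<longrightarrow> f x = 0) \<and> (\<lambda>x. (cmod (f x))\<^sup>2) summable_on UNIV"

definition l2inner :: "qstate \<Rightarrow> qstate \<Rightarrow> complex" where
  "l2inner f g = infsum (\<lambda>x. cnj (f x) * g x) UNIV"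

definition l2norm :: "qstate \<Rightarrow> real" where
  "l2norm f = sqrt (infsum (\<lambda>x. (cmod (f x))\<^sup>2) UNIV)"

definition avec :: "(nat \<Rightarrow> real) \<Rightarrow> (nat \<Rightarrow> real) \<Rightarrow> nat \<Rightarrow> qstate" where
  "avec p q j = (\<lambda>(k, b). if k = j \<and> (k, b) \<in> arcs
       then complex_of_real (if b then sqrt (p j) else sqrt (q j)) else 0)"

definition span_a :: "(nat \<Rightarrow> real) \<Rightarrow> (nat \<Rightarrow> real) \<Rightarrow> qstate set" where
  "span_a p q = {(\<lambda>x. \<Sum>j<N. c j * avec p q j x) | N c. True}"

definition cspan_a :: "(nat \<Rightarrow> real) \<Rightarrow> (nat \<Rightarrow> real) \<Rightarrow> qstate set" where
  "cspan_a p q = {\<phi>. is_ell2 \<phi> \<and> (\<exists>s. (\<forall>n. s n \<in> span_a p q) \<and>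
       (\<lambda>n. l2norm (\<lambda>x. s n x - \<phi> x)) \<longlonglongrightarrow> 0)}"

definition PiA :: "(nat \<Rightarrow> real) \<Rightarrow> (nat \<Rightarrow> real) \<Rightarrow> qstate \<Rightarrow> qstate" where
  "PiA p q \<psi> = (THE \<phi>. \<phi> \<in> cspan_a p q \<and>
       (\<forall>\<theta>\<in>cspan_a p q. l2inner \<theta> (\<lambda>x. \<psi> x - \<phi> x) = 0))"

definition coin :: "(nat \<Rightarrow> real) \<Rightarrow> (nat \<Rightarrow> real) \<Rightarrow> qstate \<Rightarrow> qstate" where
  "coin p q \<psi> = (\<lambda>x. 2 * PiA p q \<psi> x - \<psi> x)"

definition shift :: "qstate \<Rightarrow> qstate" where
  "shift \<psi> = (\<lambda>(k, b). if b then \<psi> (Suc k, False)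
                        else if 1 \<le> k then \<psi> (k - 1, True) else 0)"

definition evol :: "(nat \<Rightarrow> real) \<Rightarrow> (nat \<Rightarrow> real) \<Rightarrow> qstate \<Rightarrow> qstate" where
  "evol p q = shift \<circ> coin p q"

definition prob_at :: "(nat \<Rightarrow> real) \<Rightarrow> (nat \<Rightarrow> real) \<Rightarrow> qstate \<Rightarrow> nat \<Rightarrow> nat \<Rightarrow> real" where
  "prob_at p q \<Psi>0 t i =
     (let \<psi> = (evol p q ^^ t) \<Psi>0 in
       (\<Sum>x\<in>{x\<in>arcs. fst x = i}. (cmod (\<psi> x))\<^sup>2))"

definition cesaro_avg :: "(nat \<Rightarrow> real) \<Rightarrow> (nat \<Rightarrow> real) \<Rightarrow> qstate \<Rightarrow> nat \<Rightarrow> nat \<Rightarrow> real" where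
  "cesaro_avg p q \<Psi>0 i T = (1 / real T) * (\<Sum>t<T. prob_at p q \<Psi>0 t i)"

definition wgt :: "(nat \<Rightarrow> real) \<Rightarrow> (nat \<Rightarrow> real) \<Rightarrow> nat \<Rightarrow> real" where
  "wgt p q j = (\<Prod>k<j. p k) / (\<Prod>k\<in>{1..j}. q k)"

definition CR :: "(nat \<Rightarrow> real) \<Rightarrow> (nat \<Rightarrow> real) \<Rightarrow> real" where
  "CR p q = (\<Sum>j. wgt p q (Suc j))"

definition pi_stat :: "(nat \<Rightarrow> real) \<Rightarrow> (nat \<Rightarrow> real) \<Rightarrow> nat \<Rightarrow> real" where
  "pi_stat p q j = (1 / (1 + CR p q)) * (if j = 0 then 1 else wgt p q j)"

end

theory Submission
  imports Defs "HOL-Analysis.Analysis"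
begin


definition sqsum :: "('a \<Rightarrow> complex) \<Rightarrow> bool" where
  "sqsum f \<longleftrightarrow> (\<lambda>x. (cmod (f x))\<^sup>2) summable_on UNIV"

lemma sqsum_0[simp]: "sqsum (\<lambda>_. 0)" by (simp add: sqsum_def)

lemma summable_cmp:
  fixes h k :: "'a \<Rightarrow> real"
  assumes k: "k summable_on A" and h0: "\<And>x. 0 \<le> h x" and hk: "\<And>x. h x \<le> k x"
  shows "h summable_on A"
proof -
  have ka: "(\<lambda>x. norm (k x)) summable_on A"
    using k by (rule summable_on_iff_abs_summable_on_real[THEN iffD1])
  have "(\<lambda>x. norm (h x)) summable_on A"
    by (rule Infinite_Sum.abs_summable_on_comparison_test[OF ka]) (use h0 hk in \<open>force intro: order_trans[OF _ abs_ge_self]\<close>)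
  then show ?thesis by (rule summable_on_iff_abs_summable_on_real[THEN iffD2])
qed

lemma sqsum_add:
  assumes "sqsum f" "sqsum g" shows "sqsum (\<lambda>x. f x + g x)"
proof -
  have S: "(\<lambda>x. 2 * (cmod (f x))\<^sup>2 + 2 * (cmod (g x))\<^sup>2) summable_on UNIV"
    using assms unfolding sqsum_def
    by (intro summable_on_add summable_on_cmult_right) auto
  show ?thesis unfolding sqsum_def
  proof (rule summable_cmp[OF S])
    fix x
    have "cmod (f x + g x) \<le> cmod (f x) + cmod (g x)" by (rule norm_triangle_ineq)
    then have "(cmod (f x + g x))\<^sup>2 \<le> (cmod (f x) + cmod (g x))\<^sup>2"
      by (simp add: power_mono)
    also have "\<dots> \<le> 2 * (cmod (f x))\<^sup>2 + 2 * (cmod (g x))\<^sup>2"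
      using zero_le_power2[of "cmod (f x) - cmod (g x)"] unfolding power2_sum power2_diff by linarith
    finally show "(cmod (f x + g x))\<^sup>2 \<le> 2 * (cmod (f x))\<^sup>2 + 2 * (cmod (g x))\<^sup>2" .
  qed simp
qed

lemma sqsum_scale:
  assumes "sqsum f" shows "sqsum (\<lambda>x. c * f x)"
  using summable_on_cmult_right[OF assms[unfolded sqsum_def], of "(cmod c)\<^sup>2"]
  by (simp add: sqsum_def norm_mult power_mult_distrib)

lemma sqsum_uminus: "sqsum f \<Longrightarrow> sqsum (\<lambda>x. - f x)"
  by (simp add: sqsum_def)

lemma sqsum_diff: "sqsum f \<Longrightarrow> sqsum g \<Longrightarrow> sqsum (\<lambda>x. f x - g x)"
  using sqsum_add[of f "\<lambda>x. - g x"] sqsum_uminus by auto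

lemma inner_summable:
  assumes "sqsum f" "sqsum g"
  shows "(\<lambda>x. norm (cnj (f x) * g x)) summable_on UNIV"
proof -
  have S: "(\<lambda>x. (cmod (f x))\<^sup>2 + (cmod (g x))\<^sup>2) summable_on UNIV"
    using assms unfolding sqsum_def by (intro summable_on_add) auto
  show ?thesis
  proof (rule summable_cmp[OF S])
    fix x
    have "cmod (f x) * cmod (g x) \<le> (cmod (f x))\<^sup>2 + (cmod (g x))\<^sup>2"
      using zero_le_power2[of "cmod (f x) - cmod (g x)"] norm_ge_zero[of "f x"] norm_ge_zero[of "g x"] mult_nonneg_nonneg[of "cmod (f x)" "cmod (g x)"] unfolding power2_diff by linarith
    then show "norm (cnj (f x) * g x) \<le> (cmod (f x))\<^sup>2 + (cmod (g x))\<^sup>2"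
      by (simp add: norm_mult)
  qed simp
qed

lemma inner_summable':
  assumes "sqsum f" "sqsum g"
  shows "(\<lambda>x. cnj (f x) * g x) summable_on UNIV"
  by (rule abs_summable_summable[OF inner_summable[OF assms]])

lemma re_inner_summable:
  assumes "sqsum f" "sqsum g"
  shows "(\<lambda>x. Re (cnj (f x) * g x)) summable_on UNIV"
proof -
  have "(\<lambda>x. norm (Re (cnj (f x) * g x))) summable_on UNIV"
    by (rule summable_cmp[OF inner_summable[OF assms]]) (simp_all only: real_norm_def abs_Re_le_cmod abs_ge_zero)
  then show ?thesis by (rule summable_on_iff_abs_summable_on_real[THEN iffD2])
qed

typedef 'a l2 = "{f :: 'a \<Rightarrow> complex. sqsum f}"
  by (rule exI[of _ "\<lambda>_. 0"]) simp

instantiation l2 :: (type) real_inner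
begin

definition "0 = Abs_l2 (\<lambda>_. 0)"
definition "f + g = Abs_l2 (\<lambda>x. Rep_l2 f x + Rep_l2 g x)"
definition "- f = Abs_l2 (\<lambda>x. - Rep_l2 f x)"
definition "f - g = Abs_l2 (\<lambda>x. Rep_l2 f x - Rep_l2 g x)"
definition "scaleR r f = Abs_l2 (\<lambda>x. complex_of_real r * Rep_l2 f x)"
definition "inner f g = infsum (\<lambda>x. Re (cnj (Rep_l2 f x) * Rep_l2 g x)) UNIV"
definition "norm (f :: 'a l2) = sqrt (inner f f)"
definition "sgn (f :: 'a l2) = inverse (norm f) *\<^sub>R f"
definition "dist (f :: 'a l2) g = norm (f - g)"
definition "uniformity = (INF e\<in>{0<..}. principal {(x::'a l2, y). dist x y < e})"
definition "open U = (\<forall>x\<in>U. \<forall>\<^sub>F (x', y) in uniformity. x' = (x::'a l2) \<longrightarrow> y \<in> U)"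

lemma Rep_sq: "sqsum (Rep_l2 f)" using Rep_l2 by auto

lemma Rep_zero[simp]: "Rep_l2 0 = (\<lambda>_. 0)"
  unfolding zero_l2_def by (rule Abs_l2_inverse) simp
lemma Rep_plus[simp]: "Rep_l2 (f + g) = (\<lambda>x. Rep_l2 f x + Rep_l2 g x)"
  unfolding plus_l2_def by (rule Abs_l2_inverse) (simp add: sqsum_add Rep_sq)
lemma Rep_uminus[simp]: "Rep_l2 (- f) = (\<lambda>x. - Rep_l2 f x)"
  unfolding uminus_l2_def by (rule Abs_l2_inverse) (simp add: sqsum_uminus Rep_sq)
lemma Rep_minus[simp]: "Rep_l2 (f - g) = (\<lambda>x. Rep_l2 f x - Rep_l2 g x)"
  unfolding minus_l2_def by (rule Abs_l2_inverse) (simp add: sqsum_diff Rep_sq)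
lemma Rep_scaleR[simp]: "Rep_l2 (scaleR r f) = (\<lambda>x. complex_of_real r * Rep_l2 f x)"
  unfolding scaleR_l2_def by (rule Abs_l2_inverse) (simp add: sqsum_scale Rep_sq)

lemma l2_eqI: "(\<And>x. Rep_l2 f x = Rep_l2 g x) \<Longrightarrow> f = g"
  by (metis Rep_l2_inject ext)

lemma rsum: "(\<lambda>x. Re (cnj (Rep_l2 f x) * Rep_l2 g x)) summable_on UNIV"
  by (rule re_inner_summable[OF Rep_sq Rep_sq])

instance
proof
  fix a b c :: "'a l2" and r s :: real
  show "a + b + c = a + (b + c)" by (rule l2_eqI) simp
  show "a + b = b + a" by (rule l2_eqI) simp
  show "0 + a = a" by (rule l2_eqI) simp
  show "- a + a = 0" by (rule l2_eqI) simp
  show "a - b = a + - b" by (rule l2_eqI) simp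
  show "r *\<^sub>R (a + b) = r *\<^sub>R a + r *\<^sub>R b" by (rule l2_eqI) (simp add: algebra_simps)
  show "(r + s) *\<^sub>R a = r *\<^sub>R a + s *\<^sub>R a" by (rule l2_eqI) (simp add: algebra_simps)
  show "r *\<^sub>R s *\<^sub>R a = (r * s) *\<^sub>R a" by (rule l2_eqI) (simp add: algebra_simps)
  show "1 *\<^sub>R a = a" by (rule l2_eqI) simp
  show "dist a b = norm (a - b)" by (simp add: dist_l2_def)
  show "sgn a = inverse (norm a) *\<^sub>R a" by (simp add: sgn_l2_def)
  show "inner a b = inner b a"
    unfolding inner_l2_def by (rule infsum_cong) (simp add: mult.commute)
  show "inner (a + b) c = inner a c + inner b c"
    unfolding inner_l2_def
    by (subst infsum_add[OF rsum rsum, symmetric]) (simp add: algebra_simps)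
  show "inner (r *\<^sub>R a) b = r * inner a b"
    unfolding inner_l2_def
    by (subst infsum_cmult_right'[symmetric]) (simp add: algebra_simps)
  show "0 \<le> inner a a"
    unfolding inner_l2_def by (rule infsum_nonneg) (simp add: complex_mult_cnj)
  show "(inner a a = 0) = (a = 0)"
  proof
    assume h: "inner a a = 0"
    show "a = 0"
    proof (rule l2_eqI)
      fix x
      have "Re (cnj (Rep_l2 a x) * Rep_l2 a x) = 0"
        using nonneg_infsum_le_0D[of "\<lambda>x. Re (cnj (Rep_l2 a x) * Rep_l2 a x)" UNIV x] h rsum
        unfolding inner_l2_def by (auto simp: complex_mult_cnj)
      then show "Rep_l2 a x = Rep_l2 0 x"
        by (simp add: complex_mult_cnj mult.commute complex_eq_iff)
    qed
  qed (simp add: inner_l2_def)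
  show "norm a = sqrt (inner a a)" by (simp add: norm_l2_def)
qed (simp_all add: uniformity_l2_def open_l2_def)

end

lemma inner_l2_sq: "inner f f = infsum (\<lambda>x. (cmod (Rep_l2 f x))\<^sup>2) UNIV"
  unfolding inner_l2_def by (rule infsum_cong) (simp add: complex_mult_cnj cmod_power2 mult.commute)

lemma norm_l2_sq: "(norm f)\<^sup>2 = infsum (\<lambda>x. (cmod (Rep_l2 f x))\<^sup>2) UNIV"
  by (simp add: power2_norm_eq_inner inner_l2_sq)


lemma parallelogram_real_inner:
  fixes u v :: "'a::real_inner"
  shows "(norm (u - v))\<^sup>2 + (norm (u + v))\<^sup>2 = 2 * (norm u)\<^sup>2 + 2 * (norm v)\<^sup>2"
  by (simp add: power2_norm_eq_inner inner_diff_left inner_diff_right inner_add_left inner_add_right inner_commute)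

lemma linear_funpow: fixes W :: "'a::real_vector \<Rightarrow> 'a" assumes "linear W" shows "linear (W ^^ t)"
proof (induction t)
  case 0
  show ?case unfolding funpow.simps(1) id_def by (rule linearI) auto
next
  case (Suc t) then show ?case using linear_compose[OF Suc assms] by (simp add: o_def)
qed

lemma mean_ergodic_cauchy:
  fixes W :: "'v::real_inner \<Rightarrow> 'v"
  assumes lin: "linear W" and iso: "\<And>v. norm (W v) = norm v"
  shows "Cauchy (\<lambda>T. (1 / real T) *\<^sub>R (\<Sum>t<T. (W ^^ t) x))"
proof -
  define A where "A T v = (1 / real T) *\<^sub>R (\<Sum>t<T. (W ^^ t) v)" for T v
  have linp: "linear (W ^^ t)" for t using lin by (rule linear_funpow)
  have isop: "norm ((W ^^ t) v) = norm v" for t v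
    by (induction t) (simp_all add: iso)
  have A_add: "A T (a + b) = A T a + A T b" for T a b
    unfolding A_def using linear_add[OF linp]
    by (simp add: sum.distrib scaleR_add_right)
  have A_scale: "A T (r *\<^sub>R a) = r *\<^sub>R A T a" for T r a
    unfolding A_def using linear_scale[OF linp]
    by (simp add: scaleR_sum_right)
  have A_shift: "norm (A T (W v) - A T v) \<le> 2 * norm v / real T" for T v
  proof -
    have "(\<Sum>t<T. (W ^^ t) (W v)) - (\<Sum>t<T. (W ^^ t) v) = (\<Sum>t<T. (W ^^ Suc t) v - (W ^^ t) v)"
      by (simp add: sum_subtractf funpow_Suc_right del: funpow.simps)
    also have "\<dots> = (W ^^ T) v - v"
      by (subst sum_lessThan_telescope) simp
    finally have eq: "A T (W v) - A T v = (1 / real T) *\<^sub>R ((W ^^ T) v - v)"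
      unfolding A_def by (simp add: scaleR_diff_right[symmetric])
    have "norm ((W ^^ T) v - v) \<le> 2 * norm v"
      using norm_triangle_ineq4[of "(W ^^ T) v" v] isop[of T v] by simp
    then show ?thesis unfolding eq
      by (simp add: divide_right_mono)
  qed
  have shift0: "(\<lambda>T. A T (W v) - A T v) \<longlonglongrightarrow> 0" for v
  proof -
    have "(\<lambda>T. 2 * norm v / real T) \<longlonglongrightarrow> 0"
      by (intro tendsto_divide_0[OF tendsto_const] filterlim_at_top_imp_at_infinity[OF filterlim_real_sequentially])
    then show ?thesis
      by (rule Lim_null_comparison[rotated]) (simp add: A_shift)
  qed
  have orbit0: "(\<lambda>T. A T ((W ^^ k) x) - A T x) \<longlonglongrightarrow> 0" for k
  proof (induction k)
    case 0 then show ?case by simp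
  next
    case (Suc k)
    have "(\<lambda>T. (A T (W ((W ^^ k) x)) - A T ((W ^^ k) x)) + (A T ((W ^^ k) x) - A T x)) \<longlonglongrightarrow> 0 + 0"
      by (intro tendsto_add shift0 Suc)
    then show ?case by simp
  qed
  define H where "H = convex hull (range (\<lambda>k. (W ^^ k) x))"
  have xH: "x \<in> H" unfolding H_def
    by (rule hull_inc) (metis funpow_0 rangeI)
  have G: "H \<subseteq> {y. (\<lambda>T. A T y - A T x) \<longlonglongrightarrow> 0}"
    unfolding H_def
  proof (rule hull_minimal)
    show "range (\<lambda>k. (W ^^ k) x) \<subseteq> {y. (\<lambda>T. A T y - A T x) \<longlonglongrightarrow> 0}"
      using orbit0 by auto
    show "convex {y. (\<lambda>T. A T y - A T x) \<longlonglongrightarrow> 0}"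
    proof (rule convexI)
      fix a b :: 'v and u v :: real
      assume a: "a \<in> {y. (\<lambda>T. A T y - A T x) \<longlonglongrightarrow> 0}" and b: "b \<in> {y. (\<lambda>T. A T y - A T x) \<longlonglongrightarrow> 0}"
        and uv: "0 \<le> u" "0 \<le> v" "u + v = 1"
      have "(\<lambda>T. u *\<^sub>R (A T a - A T x) + v *\<^sub>R (A T b - A T x)) \<longlonglongrightarrow> u *\<^sub>R 0 + v *\<^sub>R 0"
        using a b by (intro tendsto_add tendsto_scaleR tendsto_const) auto
      moreover have "u *\<^sub>R (A T a - A T x) + v *\<^sub>R (A T b - A T x) = A T (u *\<^sub>R a + v *\<^sub>R b) - A T x" for T
      proof -
        have "A T x = (u + v) *\<^sub>R A T x" using uv by simp
        then show ?thesis by (simp add: A_add A_scale algebra_simps)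
      qed
      ultimately show "u *\<^sub>R a + v *\<^sub>R b \<in> {y. (\<lambda>T. A T y - A T x) \<longlonglongrightarrow> 0}"
        by simp
    qed
  qed
  have Hinv: "W y \<in> H" if "y \<in> H" for y
  proof -
    have "W y \<in> W ` H" using that by blast
    also have "\<dots> = convex hull (W ` range (\<lambda>k. (W ^^ k) x))"
      unfolding H_def by (rule convex_hull_linear_image[OF lin])
    also have "\<dots> \<subseteq> H" unfolding H_def
    proof (rule hull_mono, safe)
      fix k show "W ((W ^^ k) x) \<in> range (\<lambda>k. (W ^^ k) x)"
        using rangeI[of "\<lambda>k. (W ^^ k) x" "Suc k"] by simp
    qed
    finally show ?thesis .
  qed
  have Hpow: "(W ^^ t) y \<in> H" if "y \<in> H" for t y
    using that by (induction t) (simp_all add: Hinv)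
  have AH: "A T y \<in> H" if "y \<in> H" "1 \<le> T" for T y
  proof -
    have "(\<Sum>t\<in>{..<T}. (1 / real T) *\<^sub>R (W ^^ t) y) \<in> H"
    proof (rule convex_sum)
      show "convex H" unfolding H_def by simp
      show "(\<Sum>i\<in>{..<T}. 1 / real T) = 1" using that(2) by simp
    qed (use that Hpow in auto)
    then show ?thesis unfolding A_def by (simp add: scaleR_sum_right)
  qed
  have Anorm: "norm (A T y) \<le> norm y" for T y
  proof (cases "T = 0")
    case True then show ?thesis by (simp add: A_def)
  next
    case False
    have "norm (\<Sum>t<T. (W ^^ t) y) \<le> (\<Sum>t<T. norm ((W ^^ t) y))" by (rule norm_sum)
    also have "\<dots> = real T * norm y" by (simp add: isop)
    finally show ?thesis using False unfolding A_def
      by (simp add: divide_le_eq mult.commute)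
  qed
  define d where "d = Inf (norm ` H)"
  have bdd: "bdd_below (norm ` H)" by (rule bdd_belowI[of _ 0]) auto
  have dle: "d \<le> norm y" if "y \<in> H" for y
    unfolding d_def using bdd that by (simp add: cInf_lower)
  have d0: "0 \<le> d" unfolding d_def using xH by (intro cInf_greatest) auto
  have par: "(norm (u - v))\<^sup>2 \<le> 4 * ((d + \<delta>)\<^sup>2 - d\<^sup>2)"
    if "u \<in> H" "v \<in> H" "norm u \<le> d + \<delta>" "norm v \<le> d + \<delta>" for u v \<delta>
  proof -
    have m: "(1/2) *\<^sub>R u + (1/2) *\<^sub>R v \<in> H"
      using that(1,2) unfolding H_def by (intro convexD) auto
    have "norm (u + v) = 2 * norm ((1/2) *\<^sub>R u + (1/2) *\<^sub>R v)"
      by (simp add: scaleR_add_right[symmetric])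
    then have "2 * d \<le> norm (u + v)" using dle[OF m] by simp
    then have "(2 * d)\<^sup>2 \<le> (norm (u + v))\<^sup>2"
      using d0 by (intro power_mono) auto
    then have "4 * d\<^sup>2 \<le> (norm (u + v))\<^sup>2"
      by (simp add: power_mult_distrib)
    moreover have "(norm u)\<^sup>2 \<le> (d + \<delta>)\<^sup>2" "(norm v)\<^sup>2 \<le> (d + \<delta>)\<^sup>2"
      using that(3,4) by (auto intro!: power_mono)
    ultimately have "(norm (u - v))\<^sup>2 \<le> 2 * (d + \<delta>)\<^sup>2 + 2 * (d + \<delta>)\<^sup>2 - 4 * d\<^sup>2"
      using parallelogram_real_inner[of u v] by linarith
    then show ?thesis by (simp add: algebra_simps)
  qed
  show ?thesis
  proof (rule CauchyI)
    fix e :: real assume e: "0 < e"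
    define \<delta> where "\<delta> = min 1 (e\<^sup>2 / (64 * (2 * d + 1)))"
    have \<delta>0: "0 < \<delta>" using e d0 by (simp add: \<delta>_def)
    have "\<exists>z\<in>norm ` H. z < d + \<delta>"
      unfolding d_def by (rule cInf_lessD) (use xH \<delta>0 d_def in auto)
    then obtain y where yH: "y \<in> H" and yn: "norm y < d + \<delta>" by auto
    have small: "4 * ((d + \<delta>)\<^sup>2 - d\<^sup>2) \<le> (e / 4)\<^sup>2"
    proof -
      have "4 * ((d + \<delta>)\<^sup>2 - d\<^sup>2) = 4 * \<delta> * (2 * d + \<delta>)" by (simp add: power2_eq_square algebra_simps)
      also have "\<dots> \<le> 4 * \<delta> * (2 * d + 1)"
        using \<delta>0 d0 by (intro mult_left_mono) (auto simp: \<delta>_def)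
      also have "\<dots> \<le> 4 * (e\<^sup>2 / (64 * (2 * d + 1))) * (2 * d + 1)"
        using d0 by (intro mult_right_mono mult_left_mono) (auto simp: \<delta>_def)
      also have "\<dots> = (e / 4)\<^sup>2" using d0 by (simp add: power2_eq_square field_simps)
      finally show ?thesis .
    qed
    have Ay: "norm (A T y - y) \<le> e / 4" if "1 \<le> T" for T
    proof -
      have "(norm (A T y - y))\<^sup>2 \<le> (e / 4)\<^sup>2"
        using par[OF AH[OF yH that] yH, of \<delta>] Anorm[of T y] yn small by linarith
      then show ?thesis using e by (simp add: power2_le_iff_abs_le)
    qed
    have "(\<lambda>T. A T y - A T x) \<longlonglongrightarrow> 0" using G yH by auto
    then have "\<exists>M0. \<forall>T\<ge>M0. norm (A T y - A T x - 0) < e / 4"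
      using e unfolding LIMSEQ_iff by (meson zero_less_divide_iff zero_less_numeral)
    then obtain M0 where M0: "\<And>T. T \<ge> M0 \<Longrightarrow> norm (A T y - A T x) < e / 4"
      by auto
    show "\<exists>M. \<forall>m\<ge>M. \<forall>n\<ge>M. norm ((1 / real m) *\<^sub>R (\<Sum>t<m. (W ^^ t) x) - (1 / real n) *\<^sub>R (\<Sum>t<n. (W ^^ t) x)) < e"
    proof (intro exI allI impI)
      fix m n assume m: "max 1 M0 \<le> m" and n: "max 1 M0 \<le> n"
      have eq4: "A m x - A n x = (A m x - A m y) + ((A m y - y) + ((y - A n y) + (A n y - A n x)))" by simp
      have "norm (A m x - A n x) \<le> norm (A m x - A m y) + (norm (A m y - y) + (norm (y - A n y) + norm (A n y - A n x)))"
        unfolding eq4 by (rule order_trans[OF norm_triangle_ineq], rule add_left_mono, rule order_trans[OF norm_triangle_ineq], rule add_left_mono, rule norm_triangle_ineq)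
      also have "\<dots> < e / 4 + e / 4 + e / 4 + e / 4"
        using M0[of m] M0[of n] Ay[of m] Ay[of n] m n
        by (simp add: norm_minus_commute)
      finally show "norm ((1 / real m) *\<^sub>R (\<Sum>t<m. (W ^^ t) x) - (1 / real n) *\<^sub>R (\<Sum>t<n. (W ^^ t) x)) < e"
        unfolding A_def by simp
    qed
  qed
qed


lemma nb_UNIV: "(UNIV :: (nat \<times> bool) set) = range (\<lambda>j. (j, True)) \<union> range (\<lambda>j. (j, False))"
  by (auto intro: rangeI)

lemma nb_split:
  fixes f :: "nat \<times> bool \<Rightarrow> 'b::banach"
  assumes "f summable_on UNIV"
  shows "(\<lambda>j. f (j, True) + f (j, False)) summable_on UNIV"
    and "infsum f UNIV = infsum (\<lambda>j. f (j, True) + f (j, False)) UNIV"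
proof -
  have i1: "inj (\<lambda>j::nat. (j, True))" and i2: "inj (\<lambda>j::nat. (j, False))" by (auto intro: injI)
  have s1: "f summable_on range (\<lambda>j. (j, True))" and s2: "f summable_on range (\<lambda>j. (j, False))"
    using assms by (auto intro: summable_on_subset_banach)
  have t1: "(\<lambda>j. f (j, True)) summable_on UNIV"
    using s1 summable_on_reindex[OF i1, of f] by (simp add: o_def)
  have t2: "(\<lambda>j. f (j, False)) summable_on UNIV"
    using s2 summable_on_reindex[OF i2, of f] by (simp add: o_def)
  show "(\<lambda>j. f (j, True) + f (j, False)) summable_on UNIV"
    by (rule summable_on_add[OF t1 t2])
  have "infsum f UNIV = infsum f (range (\<lambda>j. (j, True))) + infsum f (range (\<lambda>j. (j, False)))"
    by (subst nb_UNIV, rule infsum_Un_disjoint[OF s1 s2]) auto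
  also have "\<dots> = infsum (\<lambda>j. f (j, True)) UNIV + infsum (\<lambda>j. f (j, False)) UNIV"
    using infsum_reindex[OF i1, of f] infsum_reindex[OF i2, of f] by (simp add: o_def)
  also have "\<dots> = infsum (\<lambda>j. f (j, True) + f (j, False)) UNIV"
    by (rule infsum_add[OF t1 t2, symmetric])
  finally show "infsum f UNIV = infsum (\<lambda>j. f (j, True) + f (j, False)) UNIV" .
qed

lemma nb_summable_nonneg:
  fixes f :: "nat \<times> bool \<Rightarrow> real"
  assumes nn: "\<And>x. f x \<ge> 0" and s: "(\<lambda>j. f (j, True) + f (j, False)) summable_on UNIV"
  shows "f summable_on UNIV"
proof -
  have i1: "inj (\<lambda>j::nat. (j, True))" and i2: "inj (\<lambda>j::nat. (j, False))" by (auto intro: injI)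
  have t1: "(\<lambda>j. f (j, True)) summable_on UNIV"
    by (rule summable_cmp[OF s]) (use nn in auto)
  have t2: "(\<lambda>j. f (j, False)) summable_on UNIV"
    by (rule summable_cmp[OF s]) (use nn in auto)
  have s1: "f summable_on range (\<lambda>j. (j, True))"
    using t1 summable_on_reindex[OF i1, of f] by (simp add: o_def)
  have s2: "f summable_on range (\<lambda>j. (j, False))"
    using t2 summable_on_reindex[OF i2, of f] by (simp add: o_def)
  show ?thesis
    by (subst nb_UNIV, rule summable_on_Un_disjoint[OF s1 s2]) auto
qed

lemma nb_block_eq:
  fixes f g :: "nat \<times> bool \<Rightarrow> real"
  assumes nf: "\<And>x. f x \<ge> 0" and ng: "\<And>x. g x \<ge> 0" and fs: "f summable_on UNIV"
    and blk: "\<And>j. g (j, True) + g (j, False) = f (j, True) + f (j, False)"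
  shows "g summable_on UNIV" and "infsum g UNIV = infsum f UNIV"
proof -
  have bs: "(\<lambda>j. g (j, True) + g (j, False)) summable_on UNIV"
    using nb_split(1)[OF fs] by (simp add: blk)
  show gs: "g summable_on UNIV" by (rule nb_summable_nonneg[OF ng bs])
  show "infsum g UNIV = infsum f UNIV"
    using nb_split(2)[OF gs] nb_split(2)[OF fs] by (simp add: blk)
qed

lemma nb_block_le:
  fixes f g :: "nat \<times> bool \<Rightarrow> real"
  assumes nf: "\<And>x. f x \<ge> 0" and ng: "\<And>x. g x \<ge> 0" and fs: "f summable_on UNIV"
    and blk: "\<And>j. g (j, True) + g (j, False) \<le> f (j, True) + f (j, False)"
  shows "g summable_on UNIV"
proof -
  have bs: "(\<lambda>j. g (j, True) + g (j, False)) summable_on UNIV"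
    by (rule summable_cmp[OF nb_split(1)[OF fs]]) (use ng blk in \<open>auto intro: add_nonneg_nonneg\<close>)
  show gs: "g summable_on UNIV" by (rule nb_summable_nonneg[OF ng bs])
qed

lemma refl_block:
  fixes a b :: real and x y :: complex
  assumes "a\<^sup>2 + b\<^sup>2 = 1"
  shows "(cmod (2 * (of_real a * y + of_real b * x) * of_real b - x))\<^sup>2
       + (cmod (2 * (of_real a * y + of_real b * x) * of_real a - y))\<^sup>2 = (cmod x)\<^sup>2 + (cmod y)\<^sup>2"
proof -
  have "Re x ^ 2 + Im x ^ 2 + Re y ^ 2 + Im y ^ 2 = 
        (2 * (a * Re y + b * Re x) * b - Re x)\<^sup>2 + (2 * (a * Im y + b * Im x) * b - Im x)\<^sup>2
      + (2 * (a * Re y + b * Re x) * a - Re y)\<^sup>2 + (2 * (a * Im y + b * Im x) * a - Im y)\<^sup>2"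
    using assms by algebra
  then show ?thesis by (simp add: cmod_power2)
qed


lemma sigma_nonneg_iff:
  fixes f :: "'a \<times> 'b \<Rightarrow> real"
  assumes nn: "\<And>z. f z \<ge> 0"
  shows "f summable_on UNIV \<longleftrightarrow> (\<forall>x. (\<lambda>y. f (x, y)) summable_on UNIV) \<and> (\<lambda>x. infsum (\<lambda>y. f (x, y)) UNIV) summable_on UNIV"
proof -
  have n1: "norm (f z) = f z" for z using nn[of z] by simp
  have "f summable_on UNIV \<longleftrightarrow> (\<lambda>z. norm (f z)) summable_on Sigma UNIV (\<lambda>_. UNIV)"
    by (simp only: n1 UNIV_Times_UNIV)
  also have "\<dots> \<longleftrightarrow> (\<forall>x\<in>UNIV. (\<lambda>y. norm (f (x, y))) summable_on UNIV) \<and>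
             ((\<lambda>x. norm (infsum (\<lambda>y. norm (f (x, y))) UNIV)) summable_on UNIV)"
    by (rule Infinite_Sum.abs_summable_on_Sigma_iff)
  also have "\<dots> \<longleftrightarrow> (\<forall>x. (\<lambda>y. f (x, y)) summable_on UNIV) \<and> (\<lambda>x. infsum (\<lambda>y. f (x, y)) UNIV) summable_on UNIV"
    by (simp add: n1 infsum_nonneg nn)
  finally show ?thesis .
qed

lemma sigma_nonneg_infsum:
  fixes f :: "'a \<times> 'b \<Rightarrow> real"
  assumes "f summable_on UNIV"
  shows "infsum f UNIV = infsum (\<lambda>x. infsum (\<lambda>y. f (x, y)) UNIV) UNIV"
  using infsum_Sigma_banach[of f UNIV "\<lambda>_. UNIV"] assms by simp

lemma sections_eq:
  fixes f g :: "'a \<times> 'b \<Rightarrow> real"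
  assumes nf: "\<And>z. f z \<ge> 0" and ng: "\<And>z. g z \<ge> 0" and fs: "f summable_on UNIV"
    and sec: "\<And>x. (\<lambda>y. f (x, y)) summable_on UNIV \<Longrightarrow>
               (\<lambda>y. g (x, y)) summable_on UNIV \<and> infsum (\<lambda>y. g (x, y)) UNIV = infsum (\<lambda>y. f (x, y)) UNIV"
  shows "g summable_on UNIV" and "infsum g UNIV = infsum f UNIV"
proof -
  from fs have F: "\<forall>x. (\<lambda>y. f (x, y)) summable_on UNIV" "(\<lambda>x. infsum (\<lambda>y. f (x, y)) UNIV) summable_on UNIV"
    using sigma_nonneg_iff[of f] nf by auto
  show gs: "g summable_on UNIV"
    using sigma_nonneg_iff[of g] ng F sec by auto
  show "infsum g UNIV = infsum f UNIV"
    using sigma_nonneg_infsum[OF gs] sigma_nonneg_infsum[OF fs] F sec by simp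
qed

lemma swap_summable: "(\<lambda>z. f (prod.swap z)) summable_on UNIV \<longleftrightarrow> f summable_on UNIV"
  by (rule summable_on_reindex_bij_betw) (auto intro: bij_betwI[of _ _ _ prod.swap])

lemma swap_infsum: "infsum (\<lambda>z. f (prod.swap z)) UNIV = infsum f UNIV"
  by (rule infsum_reindex_bij_betw) (auto intro: bij_betwI[of _ _ _ prod.swap])

lemma fin_supp_summable:
  fixes f :: "'a \<Rightarrow> 'b::{comm_monoid_add, t2_space, topological_space}"
  assumes "finite F" "\<And>x. x \<notin> F \<Longrightarrow> f x = 0"
  shows "f summable_on UNIV" and "infsum f UNIV = sum f F"
proof -
  have "f summable_on UNIV \<longleftrightarrow> f summable_on F"
    by (rule summable_on_cong_neutral) (use assms in auto)
  then show "f summable_on UNIV" using assms(1) by simp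
  have "infsum f UNIV = infsum f F"
    by (rule infsum_cong_neutral) (use assms in auto)
  then show "infsum f UNIV = sum f F" using assms(1) by simp
qed

lemma sq_pt_le:
  assumes "sqsum f"
  shows "(cmod (f x))\<^sup>2 \<le> infsum (\<lambda>x. (cmod (f x))\<^sup>2) UNIV"
  using finite_sum_le_infsum[of "\<lambda>x. (cmod (f x))\<^sup>2" UNIV "{x}"] assms by (simp add: sqsum_def)

lemma tail0:
  fixes B :: "nat \<Rightarrow> real"
  assumes "B summable_on UNIV"
  shows "(\<lambda>n. infsum (\<lambda>j. if n \<le> j then B j else 0) UNIV) \<longlonglongrightarrow> 0"
proof -
  have eq: "infsum (\<lambda>j. if n \<le> j then B j else 0) UNIV = infsum B UNIV - (\<Sum>j<n. B j)" for n
  proof -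
    have s1: "B summable_on {..<n}" by simp
    have s2: "B summable_on {n..}" using assms by (rule summable_on_subset_banach) auto
    have "infsum B UNIV = infsum B ({..<n} \<union> {n..})"
      by (rule arg_cong[where f="infsum B"]) auto
    also have "\<dots> = infsum B {..<n} + infsum B {n..}"
      by (rule infsum_Un_disjoint[OF s1 s2]) auto
    finally have "infsum B {n..} = infsum B UNIV - (\<Sum>j<n. B j)" by simp
    moreover have "infsum (\<lambda>j. if n \<le> j then B j else 0) UNIV = infsum B {n..}"
      by (rule infsum_cong_neutral) auto
    ultimately show ?thesis by simp
  qed
  have "B sums infsum B UNIV"
    using assms by (intro has_sum_imp_sums) (simp add: has_sum_infsum)
  then have "(\<lambda>n. \<Sum>j<n. B j) \<longlonglongrightarrow> infsum B UNIV" by (simp add: sums_def)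
  then have "(\<lambda>n. infsum B UNIV - (\<Sum>j<n. B j)) \<longlonglongrightarrow> infsum B UNIV - infsum B UNIV"
    by (intro tendsto_diff tendsto_const)
  then show ?thesis unfolding eq by simp
qed

lemma cs2: fixes a b u v :: real shows "(a * u + b * v)\<^sup>2 \<le> (a\<^sup>2 + b\<^sup>2) * (u\<^sup>2 + v\<^sup>2)"
proof -
  have "(a\<^sup>2 + b\<^sup>2) * (u\<^sup>2 + v\<^sup>2) - (a * u + b * v)\<^sup>2 = (a * v - b * u)\<^sup>2" by algebra
  then show ?thesis using zero_le_power2[of "a * v - b * u"] by linarith
qed

lemma l2norm_Abs: "sqsum f \<Longrightarrow> l2norm f = norm (Abs_l2 f)"
  by (simp add: l2norm_def norm_l2_def inner_l2_sq Abs_l2_inverse)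

lemma is_ell2_sqsum: "is_ell2 f \<longleftrightarrow> (\<forall>x. x \<notin> arcs \<longrightarrow> f x = 0) \<and> sqsum f"
  by (simp add: is_ell2_def sqsum_def)

lemma arcs_iff: "x \<in> arcs \<longleftrightarrow> x \<noteq> (0, False)"
  by (cases x) (auto simp: arcs_def)

definition avg :: "('v::real_vector \<Rightarrow> 'v) \<Rightarrow> nat \<Rightarrow> 'v \<Rightarrow> 'v" where
  "avg W T v = (1 / real T) *\<^sub>R (\<Sum>t<T. (W ^^ t) v)"

lemma sum_sign: "(\<Sum>t<T. (-1::real) ^ t) = (if even T then 0 else 1)"
  by (induction T) auto

lemma jensen2:
  fixes u :: "nat \<Rightarrow> 'a::real_inner"
  assumes T: "T > 0"
  defines "m \<equiv> (1 / real T) *\<^sub>R (\<Sum>t<T. u t)"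
  defines "n \<equiv> (1 / real T) *\<^sub>R (\<Sum>t<T. ((-1) ^ t) *\<^sub>R u t)"
  shows "(norm m)\<^sup>2 + (norm n)\<^sup>2 \<le> (1 / real T) * (\<Sum>t<T. (norm (u t))\<^sup>2) + 2 * \<bar>m \<bullet> n\<bar> / real T"
proof -
  define \<sigma> where "\<sigma> = (\<Sum>t<T. (-1::real) ^ t)"
  have sq1: "(-1::real) ^ t * (-1) ^ t = 1" for t by (simp add: power_mult_distrib[symmetric])
  have pt: "(norm (u t - m - ((-1) ^ t) *\<^sub>R n))\<^sup>2 = (norm (u t))\<^sup>2 - 2 * (u t \<bullet> m) - 2 * ((-1) ^ t * (u t \<bullet> n))
      + (norm m)\<^sup>2 + 2 * ((-1) ^ t * (m \<bullet> n)) + (norm n)\<^sup>2" for t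
  proof -
    have "(norm (u t - m - ((-1) ^ t) *\<^sub>R n))\<^sup>2 = (norm (u t))\<^sup>2 - 2 * (u t \<bullet> m) - 2 * ((-1) ^ t * (u t \<bullet> n))
      + (norm m)\<^sup>2 + 2 * ((-1) ^ t * (m \<bullet> n)) + ((-1) ^ t * (-1) ^ t) * (norm n)\<^sup>2"
      by (simp add: power2_norm_eq_inner inner_diff_left inner_diff_right inner_commute algebra_simps)
    then show ?thesis by (simp add: sq1)
  qed
  have Su: "(\<Sum>t<T. u t) = real T *\<^sub>R m" using T by (simp add: m_def)
  have Sn: "(\<Sum>t<T. ((-1) ^ t) *\<^sub>R u t) = real T *\<^sub>R n" using T by (simp add: n_def)
  have s1: "(\<Sum>t<T. u t \<bullet> m) = real T * (norm m)\<^sup>2"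
    by (simp add: inner_sum_left[symmetric] Su power2_norm_eq_inner)
  have s2: "(\<Sum>t<T. (-1) ^ t * (u t \<bullet> n)) = real T * (norm n)\<^sup>2"
  proof -
    have "(\<Sum>t<T. (-1) ^ t * (u t \<bullet> n)) = (\<Sum>t<T. ((-1) ^ t) *\<^sub>R u t) \<bullet> n"
      by (simp add: inner_sum_left)
    then show ?thesis by (simp add: Sn power2_norm_eq_inner)
  qed
  have s3: "(\<Sum>t<T. (-1) ^ t * (m \<bullet> n)) = \<sigma> * (m \<bullet> n)"
    by (simp add: \<sigma>_def sum_distrib_right)
  have "0 \<le> (\<Sum>t<T. (norm (u t - m - ((-1) ^ t) *\<^sub>R n))\<^sup>2)" by (rule sum_nonneg) simp
  also have "\<dots> = (\<Sum>t<T. (norm (u t))\<^sup>2) - 2 * (\<Sum>t<T. u t \<bullet> m) - 2 * (\<Sum>t<T. (-1) ^ t * (u t \<bullet> n))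
      + real T * (norm m)\<^sup>2 + 2 * (\<Sum>t<T. (-1) ^ t * (m \<bullet> n)) + real T * (norm n)\<^sup>2"
    unfolding pt by (simp add: sum.distrib sum_subtractf sum_distrib_left)
  also have "\<dots> = (\<Sum>t<T. (norm (u t))\<^sup>2) - real T * (norm m)\<^sup>2 - real T * (norm n)\<^sup>2 + 2 * \<sigma> * (m \<bullet> n)"
    unfolding s1 s2 s3 by simp
  finally have A: "real T * ((norm m)\<^sup>2 + (norm n)\<^sup>2) \<le> (\<Sum>t<T. (norm (u t))\<^sup>2) + 2 * \<sigma> * (m \<bullet> n)"
    by (simp add: algebra_simps)
  have "\<sigma> * (m \<bullet> n) \<le> \<bar>m \<bullet> n\<bar>"
    unfolding \<sigma>_def sum_sign by auto
  with A have "real T * ((norm m)\<^sup>2 + (norm n)\<^sup>2) \<le> (\<Sum>t<T. (norm (u t))\<^sup>2) + 2 * \<bar>m \<bullet> n\<bar>"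
    by linarith
  then show ?thesis using T by (simp add: field_simps)
qed

lemma avg_shift:
  fixes W :: "'v::real_normed_vector \<Rightarrow> 'v"
  assumes lin: "linear W" and iso: "\<And>v. norm (W v) = norm v"
  shows "norm (W (avg W T v) - avg W T v) \<le> 2 * norm v / real T"
proof -
  have isop: "norm ((W ^^ t) v) = norm v" for t v by (induction t) (simp_all add: iso)
  have "W (avg W T v) = (1 / real T) *\<^sub>R (\<Sum>t<T. W ((W ^^ t) v))"
    unfolding avg_def by (simp add: linear_scale[OF lin] linear_sum[OF lin])
  also have "(\<Sum>t<T. W ((W ^^ t) v)) = (\<Sum>t<T. (W ^^ Suc t) v)" by simp
  finally have "W (avg W T v) - avg W T v = (1 / real T) *\<^sub>R (\<Sum>t<T. (W ^^ Suc t) v - (W ^^ t) v)"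
    unfolding avg_def by (simp add: sum_subtractf scaleR_diff_right)
  also have "(\<Sum>t<T. (W ^^ Suc t) v - (W ^^ t) v) = (W ^^ T) v - v"
    by (subst sum_lessThan_telescope) simp
  finally have eq: "W (avg W T v) - avg W T v = (1 / real T) *\<^sub>R ((W ^^ T) v - v)" .
  have "norm ((W ^^ T) v - v) \<le> 2 * norm v"
    using norm_triangle_ineq4[of "(W ^^ T) v" v] isop[of T v] by simp
  then show ?thesis unfolding eq by (simp add: divide_right_mono)
qed

lemma avg_norm:
  fixes W :: "'v::real_normed_vector \<Rightarrow> 'v"
  assumes iso: "\<And>v. norm (W v) = norm v"
  shows "norm (avg W T v) \<le> norm v"
proof (cases "T = 0")
  case True then show ?thesis by (simp add: avg_def)
next
  case False
  have isop: "norm ((W ^^ t) v) = norm v" for t v by (induction t) (simp_all add: iso)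
  have "norm (\<Sum>t<T. (W ^^ t) v) \<le> (\<Sum>t<T. norm ((W ^^ t) v))" by (rule norm_sum)
  also have "\<dots> = real T * norm v" by (simp add: isop)
  finally show ?thesis using False unfolding avg_def by (simp add: divide_le_eq mult.commute)
qed

lemma iso_inner:
  fixes W :: "'v::real_inner \<Rightarrow> 'v"
  assumes lin: "linear W" and iso: "\<And>v. norm (W v) = norm v"
  shows "W a \<bullet> W b = a \<bullet> b"
proof -
  have e: "(norm (x + y))\<^sup>2 = (norm x)\<^sup>2 + 2 * (x \<bullet> y) + (norm y)\<^sup>2" for x y :: 'v
    by (simp add: power2_norm_eq_inner inner_add_left inner_add_right inner_commute)
  have "(norm (W a + W b))\<^sup>2 = (norm (a + b))\<^sup>2" using iso[of "a + b"] linear_add[OF lin] by simp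
  then show ?thesis using e[of "W a" "W b"] e[of a b] iso[of a] iso[of b] by simp
qed

lemma Rep_sum: "Rep_l2 (\<Sum>t\<in>A. f t) x = (\<Sum>t\<in>A. Rep_l2 (f t) x)"
  by (induction A rule: infinite_finite_induct) simp_all

lemma Rep_avg: "Rep_l2 (avg W T v) x = (1 / real T) * (\<Sum>t<T. Rep_l2 ((W ^^ t) v) x)"
  by (simp add: avg_def Rep_sum)

lemma sqsum_pt_bound:
  assumes "sqsum f" shows "cmod (f x) \<le> sqrt (infsum (\<lambda>x. (cmod (f x))\<^sup>2) UNIV)"
  using sq_pt_le[OF assms, of x] real_le_rsqrt by simp

lemma coord_le: "cmod (Rep_l2 a x) \<le> norm a"
proof -
  have "cmod (Rep_l2 a x) \<le> sqrt (infsum (\<lambda>x. (cmod (Rep_l2 a x))\<^sup>2) UNIV)"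
    by (rule sqsum_pt_bound[OF Rep_sq])
  also have "\<dots> = norm a" using norm_l2_sq[of a] by (simp add: real_sqrt_unique)
  finally show ?thesis .
qed

lemma coord_cauchy: assumes "Cauchy X" shows "Cauchy (\<lambda>n. Rep_l2 (X n) x)"
proof (rule CauchyI)
  fix e :: real assume "0 < e"
  then obtain M where M: "\<forall>m\<ge>M. \<forall>n\<ge>M. norm (X m - X n) < e"
    using assms unfolding Cauchy_iff by blast
  show "\<exists>M. \<forall>m\<ge>M. \<forall>n\<ge>M. norm (Rep_l2 (X m) x - Rep_l2 (X n) x) < e"
    using M coord_le[of "X _ - X _" x] by (metis Rep_minus le_less_trans)
qed

lemma coord_conv: assumes "Cauchy X" shows "(\<lambda>n. Rep_l2 (X n) x) \<longlonglongrightarrow> lim (\<lambda>n. Rep_l2 (X n) x)"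
  using coord_cauchy[OF assms] by (simp add: Cauchy_convergent_iff convergent_LIMSEQ_iff)

lemma norm_restr:
  assumes "finite E" "\<And>x. x \<notin> E \<Longrightarrow> Rep_l2 a x = 0"
  shows "(norm a)\<^sup>2 = (\<Sum>x\<in>E. (cmod (Rep_l2 a x))\<^sup>2)"
  unfolding norm_l2_sq by (rule fin_supp_summable(2)) (use assms in auto)

lemma norm_restr_le:
  assumes "finite E" "\<And>x. Rep_l2 a x = (if x \<in> E then Rep_l2 b x else 0)"
  shows "norm a \<le> norm b"
proof -
  have "(norm a)\<^sup>2 = (\<Sum>x\<in>E. (cmod (Rep_l2 a x))\<^sup>2)" by (rule norm_restr) (use assms in auto)
  also have "\<dots> = (\<Sum>x\<in>E. (cmod (Rep_l2 b x))\<^sup>2)" using assms(2) by simp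
  also have "\<dots> \<le> infsum (\<lambda>x. (cmod (Rep_l2 b x))\<^sup>2) UNIV"
    using assms(1) Rep_sq[of b] by (intro finite_sum_le_infsum) (auto simp: sqsum_def)
  also have "\<dots> = (norm b)\<^sup>2" by (rule norm_l2_sq[symmetric])
  finally show ?thesis by (rule power2_le_imp_le) simp
qed

lemma Rep_restr:
  assumes "finite E"
  shows "Rep_l2 (Abs_l2 (\<lambda>x. if x \<in> E then f x else 0)) = (\<lambda>x. if x \<in> E then f x else 0)"
proof -
  have "(\<lambda>x. (cmod (if x \<in> E then f x else 0))\<^sup>2) summable_on UNIV"
    by (rule fin_supp_summable(1)[OF assms]) auto
  then show ?thesis by (simp add: Abs_l2_inverse sqsum_def)
qed

lemma sum_E:
  assumes "g (0, False) = 0"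
  shows "sum g {x \<in> arcs. fst x = i} = g (i, True) + g (i, False)"
proof (cases "i = 0")
  case True
  then have "{x \<in> arcs. fst x = i} = {(0, True)}" by (auto simp: arcs_def)
  then show ?thesis using True assms by simp
next
  case False
  then have "{x \<in> arcs. fst x = i} = {(i, True), (i, False)}" by (auto simp: arcs_def)
  then show ?thesis by simp
qed

locale walk =
  fixes p q :: "nat \<Rightarrow> real"
  assumes nonneg_p: "\<And>j. p j \<ge> 0" and nonneg_q: "\<And>j. q j \<ge> 0"
    and pq1: "\<And>j. p j + q j = 1" and q0: "q 0 = 0"
    and ppos: "\<And>j. p j > 0" and qpos: "\<And>j. 1 \<le> j \<Longrightarrow> q j > 0"
    and pos_rec: "summable (\<lambda>j. wgt p q (Suc j))"
begin

definition sp :: "nat \<Rightarrow> complex" where "sp j = complex_of_real (sqrt (p j))"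
definition sq :: "nat \<Rightarrow> complex" where "sq j = complex_of_real (sqrt (q j))"
definition coef :: "arc \<Rightarrow> complex" where "coef x = (if snd x then sp (fst x) else sq (fst x))"
definition cc :: "qstate \<Rightarrow> nat \<Rightarrow> complex" where "cc \<phi> j = sq j * \<phi> (j, False) + sp j * \<phi> (j, True)"
definition Cf :: "qstate \<Rightarrow> qstate" where "Cf \<phi> x = 2 * cc \<phi> (fst x) * coef x - \<phi> x"
definition sig :: "arc \<Rightarrow> arc" where
  "sig x = (if snd x then (Suc (fst x), False) else if 1 \<le> fst x then (fst x - 1, True) else (0, False))"
definition Uloc :: "qstate \<Rightarrow> qstate" where "Uloc \<phi> x = Cf \<phi> (sig x)"

lemma sig_sig[simp]: "sig (sig x) = x"
  by (cases x) (auto simp: sig_def)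

lemma bij_sig: "bij sig"
  by (rule bij_betwI[of _ _ _ sig]) auto

lemma p0: "p 0 = 1" using pq1[of 0] q0 by simp
lemma sq0[simp]: "sq 0 = 0" by (simp add: sq_def q0)
lemma sp0[simp]: "sp 0 = 1" by (simp add: sp_def p0)
lemma cnj_sp[simp]: "cnj (sp j) = sp j" by (simp add: sp_def)
lemma cnj_sq[simp]: "cnj (sq j) = sq j" by (simp add: sq_def)
lemma cnj_coef[simp]: "cnj (coef x) = coef x" by (simp add: coef_def)
lemma sp_sq_norm: "sp j * sp j + sq j * sq j = 1"
  using pq1[of j] nonneg_p[of j] nonneg_q[of j]
  by (simp add: sp_def sq_def of_real_mult[symmetric] del: of_real_mult) (simp add: of_real_add[symmetric] del: of_real_add)

lemma avec_eq: "avec p q j x = (if fst x = j then coef x else 0)"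
  by (cases x) (auto simp: avec_def arcs_def coef_def sp_def sq_def q0 Suc_le_eq)

lemma Cf_block:
  "(cmod (Cf \<phi> (k, True)))\<^sup>2 + (cmod (Cf \<phi> (k, False)))\<^sup>2 = (cmod (\<phi> (k, True)))\<^sup>2 + (cmod (\<phi> (k, False)))\<^sup>2"
proof -
  have "(sqrt (q k))\<^sup>2 + (sqrt (p k))\<^sup>2 = 1" using pq1[of k] nonneg_p[of k] nonneg_q[of k] by simp
  from refl_block[OF this, of "\<phi> (k, False)" "\<phi> (k, True)"]
  show ?thesis by (simp add: Cf_def cc_def coef_def sp_def sq_def add.commute)
qed

lemma Uloc_iso:
  assumes "sqsum \<phi>"
  shows "sqsum (Uloc \<phi>)" and "infsum (\<lambda>x. (cmod (Uloc \<phi> x))\<^sup>2) UNIV = infsum (\<lambda>x. (cmod (\<phi> x))\<^sup>2) UNIV"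
proof -
  have C: "(\<lambda>x. (cmod (Cf \<phi> x))\<^sup>2) summable_on UNIV \<and> infsum (\<lambda>x. (cmod (Cf \<phi> x))\<^sup>2) UNIV = infsum (\<lambda>x. (cmod (\<phi> x))\<^sup>2) UNIV"
    using nb_block_eq[of "\<lambda>x. (cmod (\<phi> x))\<^sup>2" "\<lambda>x. (cmod (Cf \<phi> x))\<^sup>2"] assms Cf_block
    unfolding sqsum_def by auto
  have b: "bij_betw sig UNIV UNIV" using bij_sig by (simp add: bij_def)
  show "sqsum (Uloc \<phi>)" unfolding sqsum_def Uloc_def
    using summable_on_reindex_bij_betw[OF b, of "\<lambda>x. (cmod (Cf \<phi> x))\<^sup>2"] C by simp
  show "infsum (\<lambda>x. (cmod (Uloc \<phi> x))\<^sup>2) UNIV = infsum (\<lambda>x. (cmod (\<phi> x))\<^sup>2) UNIV"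
    unfolding Uloc_def using infsum_reindex_bij_betw[OF b, of "\<lambda>x. (cmod (Cf \<phi> x))\<^sup>2"] C by simp
qed

lemma Uloc_add: "Uloc (\<lambda>x. \<phi> x + \<psi> x) = (\<lambda>x. Uloc \<phi> x + Uloc \<psi> x)"
  by (rule ext) (simp add: Uloc_def Cf_def cc_def algebra_simps)
lemma Uloc_scale: "Uloc (\<lambda>x. c * \<phi> x) = (\<lambda>x. c * Uloc \<phi> x)"
  by (rule ext) (simp add: Uloc_def Cf_def cc_def algebra_simps)
lemma Uloc_diff: "Uloc (\<lambda>x. \<phi> x - \<psi> x) = (\<lambda>x. Uloc \<phi> x - Uloc \<psi> x)"
  by (rule ext) (simp add: Uloc_def Cf_def cc_def algebra_simps)
lemma Uloc_cnj: "Uloc (\<lambda>x. cnj (\<phi> x)) = (\<lambda>x. cnj (Uloc \<phi> x))"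
  by (rule ext) (simp add: Uloc_def Cf_def cc_def algebra_simps)
lemma Uloc_add_pt: "Uloc (\<lambda>x. \<phi> x + \<psi> x) y = Uloc \<phi> y + Uloc \<psi> y"
  by (simp add: Uloc_add)
lemma Uloc_scale_pt: "Uloc (\<lambda>x. c * \<phi> x) y = c * Uloc \<phi> y"
  by (simp add: Uloc_scale)
lemma Uloc_0: "Uloc (\<lambda>x. 0) = (\<lambda>x. 0)"
  by (rule ext) (simp add: Uloc_def Cf_def cc_def)


definition Uop :: "arc l2 \<Rightarrow> arc l2" where "Uop v = Abs_l2 (Uloc (Rep_l2 v))"

lemma Rep_Uop: "Rep_l2 (Uop v) = Uloc (Rep_l2 v)"
  unfolding Uop_def by (rule Abs_l2_inverse) (simp add: Uloc_iso(1) Rep_sq)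

lemma Uop_linear: "linear Uop"
proof (rule linearI)
  fix a b :: "arc l2" and r :: real
  show "Uop (a + b) = Uop a + Uop b"
    by (rule l2_eqI) (simp add: Rep_Uop Uloc_add)
  show "Uop (r *\<^sub>R a) = r *\<^sub>R Uop a"
    by (rule l2_eqI) (simp add: Rep_Uop Uloc_scale)
qed

lemma norm_eq_sq: "(norm (a::'a l2))\<^sup>2 = (norm (b::'b l2))\<^sup>2 \<Longrightarrow> norm a = norm b"
  by (simp add: power2_eq_iff_nonneg)

lemma Uop_norm: "norm (Uop v) = norm v"
  by (rule norm_eq_sq) (simp add: norm_l2_sq Rep_Uop Uloc_iso(2) Rep_sq)

definition Lt :: "(arc \<times> arc \<Rightarrow> complex) \<Rightarrow> arc \<times> arc \<Rightarrow> complex" where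
  "Lt X z = Uloc (\<lambda>y. X (fst z, y)) (snd z)"
definition Rt :: "(arc \<times> arc \<Rightarrow> complex) \<Rightarrow> arc \<times> arc \<Rightarrow> complex" where
  "Rt X z = Uloc (\<lambda>x. X (x, snd z)) (fst z)"

lemma Lt_iso:
  assumes "sqsum X"
  shows "sqsum (Lt X)" and "infsum (\<lambda>z. (cmod (Lt X z))\<^sup>2) UNIV = infsum (\<lambda>z. (cmod (X z))\<^sup>2) UNIV"
proof -
  have sec: "(\<lambda>y. (cmod (Lt X (x, y)))\<^sup>2) summable_on UNIV \<and>
      infsum (\<lambda>y. (cmod (Lt X (x, y)))\<^sup>2) UNIV = infsum (\<lambda>y. (cmod (X (x, y)))\<^sup>2) UNIV"
    if "(\<lambda>y. (cmod (X (x, y)))\<^sup>2) summable_on UNIV" for x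
    using Uloc_iso[of "\<lambda>y. X (x, y)"] that unfolding sqsum_def Lt_def by simp
  show "sqsum (Lt X)" unfolding sqsum_def
    by (rule sections_eq(1)[of "\<lambda>z. (cmod (X z))\<^sup>2"]) (use assms sec in \<open>auto simp: sqsum_def\<close>)
  show "infsum (\<lambda>z. (cmod (Lt X z))\<^sup>2) UNIV = infsum (\<lambda>z. (cmod (X z))\<^sup>2) UNIV"
    by (rule sections_eq(2)[of "\<lambda>z. (cmod (X z))\<^sup>2"]) (use assms sec in \<open>auto simp: sqsum_def\<close>)
qed

lemma Rt_Lt: "Rt X = (\<lambda>z. Lt (\<lambda>w. X (prod.swap w)) (prod.swap z))"
  by (rule ext) (simp add: Rt_def Lt_def)

lemma sqsum_swap: "sqsum (\<lambda>w. X (prod.swap w)) \<longleftrightarrow> sqsum X"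
  unfolding sqsum_def using swap_summable[of "\<lambda>z. (cmod (X z))\<^sup>2"] by simp

lemma Rt_iso:
  assumes "sqsum X"
  shows "sqsum (Rt X)" and "infsum (\<lambda>z. (cmod (Rt X z))\<^sup>2) UNIV = infsum (\<lambda>z. (cmod (X z))\<^sup>2) UNIV"
proof -
  have s: "sqsum (\<lambda>w. X (prod.swap w))" using assms sqsum_swap by blast
  have "sqsum (\<lambda>z. Lt (\<lambda>w. X (prod.swap w)) (prod.swap z))"
    using Lt_iso(1)[OF s] sqsum_swap[of "Lt (\<lambda>w. X (prod.swap w))"] by simp
  then show "sqsum (Rt X)" by (simp add: Rt_Lt)
  have "infsum (\<lambda>z. (cmod (Rt X z))\<^sup>2) UNIV = infsum (\<lambda>z. (cmod (Lt (\<lambda>w. X (prod.swap w)) z))\<^sup>2) UNIV"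
    unfolding Rt_Lt by (rule swap_infsum)
  also have "\<dots> = infsum (\<lambda>z. (cmod (X (prod.swap z)))\<^sup>2) UNIV"
    by (rule Lt_iso(2)[OF s])
  also have "\<dots> = infsum (\<lambda>z. (cmod (X z))\<^sup>2) UNIV"
    by (rule swap_infsum)
  finally show "infsum (\<lambda>z. (cmod (Rt X z))\<^sup>2) UNIV = infsum (\<lambda>z. (cmod (X z))\<^sup>2) UNIV" .
qed

definition Wop :: "(arc \<times> arc) l2 \<Rightarrow> (arc \<times> arc) l2" where
  "Wop X = Abs_l2 (Rt (Lt (Rep_l2 X)))"

lemma Rep_Wop: "Rep_l2 (Wop X) = Rt (Lt (Rep_l2 X))"
  unfolding Wop_def by (rule Abs_l2_inverse) (simp add: Rt_iso(1) Lt_iso(1) Rep_sq)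

lemma Lt_add: "Lt (\<lambda>z. X z + Y z) = (\<lambda>z. Lt X z + Lt Y z)"
  by (rule ext) (simp add: Lt_def Uloc_add_pt)
lemma Rt_add: "Rt (\<lambda>z. X z + Y z) = (\<lambda>z. Rt X z + Rt Y z)"
  by (rule ext) (simp add: Rt_def Uloc_add_pt)
lemma Lt_scale: "Lt (\<lambda>z. c * X z) = (\<lambda>z. c * Lt X z)"
  by (rule ext) (simp add: Lt_def Uloc_scale_pt)
lemma Rt_scale: "Rt (\<lambda>z. c * X z) = (\<lambda>z. c * Rt X z)"
  by (rule ext) (simp add: Rt_def Uloc_scale_pt)

lemma Wop_linear: "linear Wop"
proof (rule linearI)
  fix a b :: "(arc \<times> arc) l2" and r :: real
  show "Wop (a + b) = Wop a + Wop b"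
    by (rule l2_eqI) (simp add: Rep_Wop Lt_add Rt_add)
  show "Wop (r *\<^sub>R a) = r *\<^sub>R Wop a"
    by (rule l2_eqI) (simp add: Rep_Wop Lt_scale Rt_scale)
qed

lemma Wop_norm: "norm (Wop v) = norm v"
  by (rule norm_eq_sq) (simp add: norm_l2_sq Rep_Wop Rt_iso(2) Lt_iso Rep_sq)

definition tens :: "qstate \<Rightarrow> arc \<times> arc \<Rightarrow> complex" where
  "tens \<phi> z = \<phi> (fst z) * cnj (\<phi> (snd z))"

lemma sqsum_tens:
  assumes "sqsum \<phi>" shows "sqsum (tens \<phi>)"
proof -
  let ?f = "\<lambda>x. (cmod (\<phi> x))\<^sup>2"
  have eq: "(cmod (tens \<phi> z))\<^sup>2 = ?f (fst z) * ?f (snd z)" for z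
    by (simp add: tens_def norm_mult power_mult_distrib)
  have fs: "?f summable_on UNIV" using assms by (simp add: sqsum_def)
  have "(\<lambda>z. ?f (fst z) * ?f (snd z)) summable_on UNIV"
    unfolding sigma_nonneg_iff[of "\<lambda>z. ?f (fst z) * ?f (snd z)", OF mult_nonneg_nonneg[OF zero_le_power2 zero_le_power2]]
  proof safe
    fix x show "(\<lambda>y. ?f (fst (x, y)) * ?f (snd (x, y))) summable_on UNIV"
      using summable_on_cmult_right[OF fs, of "?f x"] by simp
  next
    have "(\<lambda>x. infsum (\<lambda>y. ?f (fst (x, y)) * ?f (snd (x, y))) UNIV) = (\<lambda>x. ?f x * infsum ?f UNIV)"
      by (simp add: infsum_cmult_right')
    then show "(\<lambda>x. infsum (\<lambda>y. ?f (fst (x, y)) * ?f (snd (x, y))) UNIV) summable_on UNIV"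
      using summable_on_cmult_left[OF fs] by simp
  qed
  then show ?thesis unfolding sqsum_def eq .
qed

lemma Rt_Lt_tens: "Rt (Lt (tens \<phi>)) = tens (Uloc \<phi>)"
proof -
  have L: "Lt (tens \<phi>) = (\<lambda>z. \<phi> (fst z) * cnj (Uloc \<phi> (snd z)))"
  proof (rule ext)
    fix z :: "arc \<times> arc"
    have "Lt (tens \<phi>) z = Uloc (\<lambda>y. \<phi> (fst z) * cnj (\<phi> y)) (snd z)"
      by (simp add: Lt_def tens_def)
    also have "\<dots> = \<phi> (fst z) * Uloc (\<lambda>y. cnj (\<phi> y)) (snd z)"
      by (simp add: Uloc_scale[of "\<phi> (fst z)" "\<lambda>y. cnj (\<phi> y)"])
    also have "\<dots> = \<phi> (fst z) * cnj (Uloc \<phi> (snd z))"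
      by (simp add: Uloc_cnj)
    finally show "Lt (tens \<phi>) z = \<phi> (fst z) * cnj (Uloc \<phi> (snd z))" .
  qed
  show ?thesis
  proof (rule ext)
    fix z :: "arc \<times> arc"
    have "Rt (Lt (tens \<phi>)) z = Uloc (\<lambda>x. cnj (Uloc \<phi> (snd z)) * \<phi> x) (fst z)"
      by (simp add: Rt_def L mult.commute)
    also have "\<dots> = cnj (Uloc \<phi> (snd z)) * Uloc \<phi> (fst z)"
      by (simp add: Uloc_scale[of "cnj (Uloc \<phi> (snd z))" \<phi>])
    finally show "Rt (Lt (tens \<phi>)) z = tens (Uloc \<phi>) z" by (simp add: tens_def mult.commute)
  qed
qed

definition Tl :: "arc l2 \<Rightarrow> (arc \<times> arc) l2" where "Tl v = Abs_l2 (tens (Rep_l2 v))"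

lemma Rep_Tl: "Rep_l2 (Tl v) = tens (Rep_l2 v)"
  unfolding Tl_def by (rule Abs_l2_inverse) (simp add: sqsum_tens Rep_sq)

lemma Wop_Tl: "Wop (Tl v) = Tl (Uop v)"
  by (rule l2_eqI) (simp add: Rep_Wop Rep_Tl Rt_Lt_tens Rep_Uop)

lemma Wop_pow_Tl: "(Wop ^^ t) (Tl v) = Tl ((Uop ^^ t) v)"
  by (induction t) (simp_all add: Wop_Tl)


definition Pl :: "qstate \<Rightarrow> qstate" where "Pl \<phi> x = cc \<phi> (fst x) * coef x"
definition blk :: "qstate \<Rightarrow> bool" where "blk \<theta> \<longleftrightarrow> (\<forall>k. sp k * \<theta> (k, False) = sq k * \<theta> (k, True))"

lemma blk_eq: assumes "blk \<theta>" shows "\<theta> x = cc \<theta> (fst x) * coef x"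
proof (cases x)
  case (Pair k b)
  have h: "sp k * \<theta> (k, False) = sq k * \<theta> (k, True)" using assms by (simp add: blk_def)
  have n: "sp k * sp k + sq k * sq k = 1" by (rule sp_sq_norm)
  show ?thesis
  proof (cases b)
    case True
    have "cc \<theta> k * sp k = sq k * (sp k * \<theta> (k, False)) + sp k * sp k * \<theta> (k, True)"
      by (simp add: cc_def algebra_simps)
    also have "\<dots> = (sp k * sp k + sq k * sq k) * \<theta> (k, True)" unfolding h by (simp add: algebra_simps)
    finally show ?thesis using Pair True n by (simp add: coef_def)
  next
    case False
    have "cc \<theta> k * sq k = sq k * sq k * \<theta> (k, False) + sp k * (sq k * \<theta> (k, True))"
      by (simp add: cc_def algebra_simps)
    also have "\<dots> = (sp k * sp k + sq k * sq k) * \<theta> (k, False)" unfolding h[symmetric] by (simp add: algebra_simps)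
    finally show ?thesis using Pair False n by (simp add: coef_def)
  qed
qed

lemma cc_block_le: "(cmod (cc \<phi> k))\<^sup>2 \<le> (cmod (\<phi> (k, True)))\<^sup>2 + (cmod (\<phi> (k, False)))\<^sup>2"
proof -
  have a: "sqrt (q k) * sqrt (q k) + sqrt (p k) * sqrt (p k) = 1"
    using pq1[of k] nonneg_p[of k] nonneg_q[of k] by simp
  have "cmod (cc \<phi> k) \<le> sqrt (q k) * cmod (\<phi> (k, False)) + sqrt (p k) * cmod (\<phi> (k, True))"
    unfolding cc_def sq_def sp_def
    using norm_triangle_ineq[of "complex_of_real (sqrt (q k)) * \<phi> (k, False)" "complex_of_real (sqrt (p k)) * \<phi> (k, True)"]
    by (simp add: norm_mult nonneg_p nonneg_q)
  then have "(cmod (cc \<phi> k))\<^sup>2 \<le> (sqrt (q k) * cmod (\<phi> (k, False)) + sqrt (p k) * cmod (\<phi> (k, True)))\<^sup>2"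
    by (simp add: power_mono)
  also have "\<dots> \<le> ((sqrt (q k))\<^sup>2 + (sqrt (p k))\<^sup>2) * ((cmod (\<phi> (k, False)))\<^sup>2 + (cmod (\<phi> (k, True)))\<^sup>2)"
    by (rule cs2)
  finally show ?thesis using a by (simp add: power2_eq_square)
qed

lemma Pl_block: "(cmod (Pl \<phi> (k, True)))\<^sup>2 + (cmod (Pl \<phi> (k, False)))\<^sup>2 = (cmod (cc \<phi> k))\<^sup>2"
proof -
  have "(cmod (sp k))\<^sup>2 + (cmod (sq k))\<^sup>2 = 1"
    using pq1[of k] nonneg_p[of k] nonneg_q[of k] by (simp add: sp_def sq_def)
  then show ?thesis
    by (simp add: Pl_def coef_def norm_mult power_mult_distrib distrib_left[symmetric])
qed

lemma sqsum_Pl: assumes "sqsum \<phi>" shows "sqsum (Pl \<phi>)"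
  unfolding sqsum_def
  by (rule nb_block_le[of "\<lambda>x. (cmod (\<phi> x))\<^sup>2"]) (use assms in \<open>auto simp: sqsum_def Pl_block cc_block_le\<close>)

lemma l2inner_avec: "l2inner (avec p q k) f = cc f k"
proof -
  have "l2inner (avec p q k) f = (\<Sum>x\<in>{(k, True), (k, False)}. cnj (avec p q k x) * f x)"
    unfolding l2inner_def by (rule fin_supp_summable(2)) (auto simp: avec_eq)
  then show ?thesis by (simp add: avec_eq coef_def cc_def)
qed

lemma span_form: assumes "s \<in> span_a p q"
  obtains N c where "\<And>k b. s (k, b) = (if k < N then c k * coef (k, b) else 0)"
proof -
  obtain N c where s: "s = (\<lambda>x. \<Sum>j<N. c j * avec p q j x)" using assms by (auto simp: span_a_def)
  have "s (k, b) = (if k < N then c k * coef (k, b) else 0)" for k b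
    unfolding s avec_eq by (simp add: if_distrib[of "\<lambda>t. c _ * t"] sum.delta' cong: if_cong)
  then show ?thesis using that by blast
qed

lemma span_blk: assumes "s \<in> span_a p q" shows "blk s"
proof -
  obtain N c where "\<And>k b. s (k, b) = (if k < N then c k * coef (k, b) else 0)"
    using span_form[OF assms] by blast
  then show ?thesis by (simp add: blk_def coef_def algebra_simps)
qed

lemma span_sqsum: assumes "s \<in> span_a p q" shows "sqsum s"
proof -
  obtain N c where s: "\<And>k b. s (k, b) = (if k < N then c k * coef (k, b) else 0)"
    using span_form[OF assms] by blast
  have "(\<lambda>x. (cmod (s x))\<^sup>2) summable_on UNIV"
    by (rule fin_supp_summable(1)[of "{..<N} \<times> UNIV"]) (auto simp: s split: if_splits)
  then show ?thesis by (simp add: sqsum_def)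
qed

lemma cspan_blk: assumes "\<theta> \<in> cspan_a p q" shows "blk \<theta>"
proof -
  from assms obtain s where th: "is_ell2 \<theta>" and sp_: "\<And>n. s n \<in> span_a p q"
    and lim: "(\<lambda>n. l2norm (\<lambda>x. s n x - \<theta> x)) \<longlonglongrightarrow> 0"
    by (auto simp: cspan_a_def)
  have pt: "(\<lambda>n. s n x) \<longlonglongrightarrow> \<theta> x" for x
  proof -
    have "cmod (s n x - \<theta> x) \<le> l2norm (\<lambda>x. s n x - \<theta> x)" for n
      unfolding l2norm_def
      by (rule sqsum_pt_bound[of "\<lambda>x. s n x - \<theta> x"]) (use th span_sqsum[OF sp_] in \<open>auto simp: is_ell2_sqsum intro: sqsum_diff\<close>)
    then have "(\<lambda>n. s n x - \<theta> x) \<longlonglongrightarrow> 0"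
      by (intro Lim_null_comparison[OF _ lim]) auto
    then show ?thesis by (simp add: LIM_zero_iff)
  qed
  show ?thesis unfolding blk_def
  proof
    fix k
    have "(\<lambda>n. sp k * s n (k, False) - sq k * s n (k, True)) \<longlonglongrightarrow> sp k * \<theta> (k, False) - sq k * \<theta> (k, True)"
      by (intro tendsto_intros pt)
    moreover have "sp k * s n (k, False) - sq k * s n (k, True) = 0" for n
      using span_blk[OF sp_[of n]] by (simp add: blk_def)
    ultimately show "sp k * \<theta> (k, False) = sq k * \<theta> (k, True)"
      using LIMSEQ_unique[OF _ tendsto_const] by fastforce
  qed
qed

lemma ell2_avec: "is_ell2 (avec p q k)"
proof -
  have "(\<lambda>x. (cmod (avec p q k x))\<^sup>2) summable_on UNIV"
    by (rule fin_supp_summable(1)[of "{(k, True), (k, False)}"]) (auto simp: avec_eq)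
  then show ?thesis by (auto simp: is_ell2_def avec_def)
qed

lemma avec_cspan: "avec p q k \<in> cspan_a p q"
proof -
  have "avec p q k \<in> span_a p q"
    unfolding span_a_def
    by (rule CollectI, rule exI[of _ "Suc k"], rule exI[of _ "\<lambda>j. if j = k then 1 else 0"])
       (simp add: if_distrib cong: if_cong)
  then show ?thesis unfolding cspan_a_def using ell2_avec
    by (auto intro!: exI[of _ "\<lambda>n. avec p q k"] simp: l2norm_def)
qed

lemma Pl_ell2: assumes "is_ell2 \<phi>" shows "is_ell2 (Pl \<phi>)"
  using assms sqsum_Pl by (auto simp: is_ell2_sqsum arcs_iff Pl_def coef_def)

lemma Pl_cspan: assumes "is_ell2 \<phi>" shows "Pl \<phi> \<in> cspan_a p q"
proof -
  have sP: "sqsum (Pl \<phi>)" using Pl_ell2[OF assms] by (simp add: is_ell2_sqsum)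
  define s where "s n = (\<lambda>x. \<Sum>j<n. cc \<phi> j * avec p q j x)" for n
  have sspan: "s n \<in> span_a p q" for n unfolding s_def span_a_def by blast
  have s_eq: "s n x = (if fst x < n then Pl \<phi> x else 0)" for n x
    unfolding s_def avec_eq Pl_def by (simp add: if_distrib[of "\<lambda>t. cc \<phi> _ * t"] sum.delta' cong: if_cong)
  define B where "B j = (cmod (Pl \<phi> (j, True)))\<^sup>2 + (cmod (Pl \<phi> (j, False)))\<^sup>2" for j
  have Bs: "B summable_on UNIV" unfolding B_def
    using nb_split(1)[of "\<lambda>x. (cmod (Pl \<phi> x))\<^sup>2"] sP by (simp add: sqsum_def)
  have "l2norm (\<lambda>x. s n x - Pl \<phi> x) = sqrt (infsum (\<lambda>j. if n \<le> j then B j else 0) UNIV)" for n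
  proof -
    have e: "(\<lambda>x. (cmod (s n x - Pl \<phi> x))\<^sup>2) = (\<lambda>x. if n \<le> fst x then (cmod (Pl \<phi> x))\<^sup>2 else 0)"
      by (rule ext) (simp add: s_eq)
    have sm: "(\<lambda>x. if n \<le> fst x then (cmod (Pl \<phi> x))\<^sup>2 else 0) summable_on UNIV"
      by (rule summable_cmp[of "\<lambda>x. (cmod (Pl \<phi> x))\<^sup>2"]) (use sP in \<open>auto simp: sqsum_def\<close>)
    show ?thesis unfolding l2norm_def e nb_split(2)[OF sm]
      by (simp add: B_def if_distrib cong: if_cong)
  qed
  moreover have "(\<lambda>n. sqrt (infsum (\<lambda>j. if n \<le> j then B j else 0) UNIV)) \<longlonglongrightarrow> 0"
    using tendsto_real_sqrt[OF tail0[OF Bs]] by simp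
  ultimately have "(\<lambda>n. l2norm (\<lambda>x. s n x - Pl \<phi> x)) \<longlonglongrightarrow> 0" by simp
  then show ?thesis unfolding cspan_a_def using Pl_ell2[OF assms] sspan by blast
qed

lemma Pl_orth:
  assumes "is_ell2 \<phi>" "\<theta> \<in> cspan_a p q"
  shows "l2inner \<theta> (\<lambda>x. \<phi> x - Pl \<phi> x) = 0"
proof -
  have b: "blk \<theta>" by (rule cspan_blk[OF assms(2)])
  have st: "sqsum \<theta>" using assms(2) by (auto simp: cspan_a_def is_ell2_sqsum)
  have sd: "sqsum (\<lambda>x. \<phi> x - Pl \<phi> x)"
    using assms(1) Pl_ell2[OF assms(1)] by (auto simp: is_ell2_sqsum intro: sqsum_diff)
  have hs: "(\<lambda>x. cnj (\<theta> x) * (\<phi> x - Pl \<phi> x)) summable_on UNIV"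
    by (rule inner_summable'[OF st sd])
  have n: "sp k * sp k + sq k * sq k = 1" for k by (rule sp_sq_norm)
  have blk0: "cnj (\<theta> (k, True)) * (\<phi> (k, True) - Pl \<phi> (k, True)) + cnj (\<theta> (k, False)) * (\<phi> (k, False) - Pl \<phi> (k, False)) = 0" for k
  proof -
    have "cnj (\<theta> (k, True)) * (\<phi> (k, True) - Pl \<phi> (k, True)) + cnj (\<theta> (k, False)) * (\<phi> (k, False) - Pl \<phi> (k, False))
        = cnj (cc \<theta> k) * (cc \<phi> k - (sp k * sp k + sq k * sq k) * cc \<phi> k)"
      using blk_eq[OF b, of "(k, True)"] blk_eq[OF b, of "(k, False)"]
      by (simp add: Pl_def coef_def cc_def[of \<phi>] algebra_simps)
    then show ?thesis using n by simp
  qed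
  show ?thesis unfolding l2inner_def nb_split(2)[OF hs] blk0 by simp
qed

lemma PiA_eq: assumes "is_ell2 \<phi>" shows "PiA p q \<phi> = Pl \<phi>"
  unfolding PiA_def
proof (rule the_equality)
  show "Pl \<phi> \<in> cspan_a p q \<and> (\<forall>\<theta>\<in>cspan_a p q. l2inner \<theta> (\<lambda>x. \<phi> x - Pl \<phi> x) = 0)"
    using Pl_cspan[OF assms] Pl_orth[OF assms] by blast
next
  fix \<psi> assume h: "\<psi> \<in> cspan_a p q \<and> (\<forall>\<theta>\<in>cspan_a p q. l2inner \<theta> (\<lambda>x. \<phi> x - \<psi> x) = 0)"
  have "cc (\<lambda>x. \<phi> x - \<psi> x) k = 0" for k
    using h avec_cspan[of k] by (simp add: l2inner_avec[symmetric])
  then have ccq: "cc \<psi> k = cc \<phi> k" for k by (simp add: cc_def algebra_simps)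
  show "\<psi> = Pl \<phi>"
  proof
    fix x show "\<psi> x = Pl \<phi> x"
      using blk_eq[OF cspan_blk, of \<psi> x] h by (simp add: Pl_def ccq)
  qed
qed

lemma coin_eq: "is_ell2 \<phi> \<Longrightarrow> coin p q \<phi> = Cf \<phi>"
  by (rule ext) (simp add: coin_def PiA_eq Pl_def Cf_def)

lemma evol_eq: assumes "is_ell2 \<phi>" shows "evol p q \<phi> = Uloc \<phi>"
proof
  fix x :: arc
  have z: "\<phi> (0, False) = 0" using assms by (auto simp: is_ell2_def arcs_def)
  show "evol p q \<phi> x = Uloc \<phi> x"
    by (cases x) (auto simp: evol_def shift_def coin_eq[OF assms] Uloc_def sig_def Cf_def z coef_def)
qed

lemma Uloc_ell2: assumes "is_ell2 \<phi>" shows "is_ell2 (Uloc \<phi>)"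
proof -
  have z: "\<phi> (0, False) = 0" using assms by (auto simp: is_ell2_def arcs_def)
  have "Uloc \<phi> (0, False) = 0" by (simp add: Uloc_def sig_def Cf_def z coef_def)
  then show ?thesis using assms Uloc_iso(1) by (auto simp: is_ell2_sqsum arcs_iff)
qed

lemma evol_pow:
  assumes "is_ell2 \<Psi>0"
  shows "is_ell2 ((evol p q ^^ t) \<Psi>0) \<and> (evol p q ^^ t) \<Psi>0 = Rep_l2 ((Uop ^^ t) (Abs_l2 \<Psi>0))"
proof (induction t)
  case 0 then show ?case using assms by (simp add: Abs_l2_inverse is_ell2_sqsum)
next
  case (Suc t)
  then have "is_ell2 (Rep_l2 ((Uop ^^ t) (Abs_l2 \<Psi>0)))" by metis
  then show ?case using Suc by (simp add: evol_eq Uloc_ell2 Rep_Uop)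
qed


definition Z :: real where "Z = 1 + CR p q"
definition pis :: "nat \<Rightarrow> real" where "pis k = pi_stat p q k"

lemma wgt0: "wgt p q 0 = 1" by (simp add: wgt_def)

lemma wgt_Suc: "wgt p q (Suc k) * q (Suc k) = wgt p q k * p k"
proof -
  have "q (Suc k) \<noteq> 0" using qpos[of "Suc k"] by simp
  then show ?thesis by (simp add: wgt_def field_simps)
qed

lemma wgt_pos: "wgt p q k > 0"
  unfolding wgt_def using ppos qpos by (auto intro!: divide_pos_pos prod_pos)

lemma CR_nonneg: "CR p q \<ge> 0"
  unfolding CR_def using pos_rec wgt_pos by (intro suminf_nonneg) (auto intro: less_imp_le)

lemma Z_pos: "Z > 0" using CR_nonneg by (simp add: Z_def)

lemma pis_eq: "pis k = wgt p q k / Z"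
  by (cases k) (simp_all add: pis_def pi_stat_def Z_def wgt0)

lemma pis_pos: "pis k > 0" using wgt_pos Z_pos by (simp add: pis_eq)

lemma pis_has_sum: "(pis has_sum 1) UNIV"
proof -
  have "(\<lambda>j. wgt p q (Suc j)) sums CR p q" using pos_rec by (simp add: CR_def summable_sums)
  then have "wgt p q sums (CR p q + 1)" by (simp add: sums_Suc_iff wgt0)
  then have "(\<lambda>k. wgt p q k / Z) sums ((CR p q + 1) / Z)" by (rule sums_divide)
  then have "pis sums 1" using Z_pos by (simp add: pis_eq[abs_def] Z_def add.commute)
  then show ?thesis by (rule sums_nonneg_imp_has_sum) (simp add: pis_pos less_imp_le)
qed

lemma pis_balance: "pis (Suc k) * q (Suc k) = pis k * p k"
  using wgt_Suc[of k] Z_pos by (simp add: pis_eq field_simps)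

lemma sqrt_balance: "sqrt (pis (Suc k)) * sqrt (q (Suc k)) = sqrt (pis k) * sqrt (p k)"
  by (simp add: real_sqrt_mult[symmetric] pis_balance)

definition vs :: "complex \<Rightarrow> qstate" where
  "vs s x = s ^ fst x * complex_of_real (sqrt (pis (fst x))) * coef x"

lemma cmod_pow_sign: "s = 1 \<or> s = -1 \<Longrightarrow> cmod (s ^ k) = 1"
  by (auto simp: norm_power)

lemma vs_block: assumes "s = 1 \<or> s = -1"
  shows "(cmod (vs s (k, True)))\<^sup>2 + (cmod (vs s (k, False)))\<^sup>2 = pis k"
proof -
  have "(cmod (sp k))\<^sup>2 + (cmod (sq k))\<^sup>2 = 1"
    using pq1[of k] nonneg_p[of k] nonneg_q[of k] by (simp add: sp_def sq_def)
  then show ?thesis using cmod_pow_sign[OF assms, of k] pis_pos[of k]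
    by (simp add: vs_def coef_def norm_mult power_mult_distrib distrib_left[symmetric] less_imp_le)
qed

lemma vs_sqsum: assumes "s = 1 \<or> s = -1" shows "sqsum (vs s)" and "infsum (\<lambda>x. (cmod (vs s x))\<^sup>2) UNIV = 1"
proof -
  have bs: "(\<lambda>j. (cmod (vs s (j, True)))\<^sup>2 + (cmod (vs s (j, False)))\<^sup>2) summable_on UNIV"
    using pis_has_sum by (simp add: vs_block[OF assms] summable_on_def) blast
  have gs: "(\<lambda>x. (cmod (vs s x))\<^sup>2) summable_on UNIV"
    by (rule nb_summable_nonneg[OF _ bs]) simp
  then show "sqsum (vs s)" by (simp add: sqsum_def)
  show "infsum (\<lambda>x. (cmod (vs s x))\<^sup>2) UNIV = 1"
    using nb_split(2)[OF gs] pis_has_sum by (simp add: vs_block[OF assms] infsumI)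
qed

lemma cc_vs: "cc (vs s) k = s ^ k * complex_of_real (sqrt (pis k))"
proof -
  have "cc (vs s) k = s ^ k * complex_of_real (sqrt (pis k)) * (sq k * sq k + sp k * sp k)"
    by (simp add: cc_def vs_def coef_def algebra_simps)
  then show ?thesis using sp_sq_norm[of k] by (simp add: add.commute)
qed

lemma Cf_vs: "Cf (vs s) = vs s"
proof
  fix x show "Cf (vs s) x = vs s x"
    by (simp add: Cf_def cc_vs vs_def)
qed

lemma Uloc_vs: assumes "s = 1 \<or> s = -1" shows "Uloc (vs s) x = s * vs s x"
proof (cases x)
  case (Pair k b)
  have ss: "s * s = 1" using assms by auto
  show ?thesis
  proof (cases b)
    case True
    have "Uloc (vs s) x = vs s (Suc k, False)" by (simp add: Uloc_def Cf_vs sig_def Pair True)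
    also have "\<dots> = s ^ Suc k * complex_of_real (sqrt (pis (Suc k)) * sqrt (q (Suc k)))"
      by (simp add: vs_def coef_def sq_def)
    also have "\<dots> = s * (s ^ k * complex_of_real (sqrt (pis k) * sqrt (p k)))"
      by (simp add: sqrt_balance)
    also have "\<dots> = s * vs s x" by (simp add: vs_def coef_def sp_def Pair True)
    finally show ?thesis .
  next
    case False
    show ?thesis
    proof (cases k)
      case 0 then show ?thesis by (simp add: Uloc_def Cf_vs sig_def Pair False vs_def coef_def)
    next
      case (Suc k')
      have "Uloc (vs s) x = vs s (k', True)" by (simp add: Uloc_def Cf_vs sig_def Pair False Suc)
      also have "\<dots> = s ^ k' * complex_of_real (sqrt (pis k') * sqrt (p k'))"
        by (simp add: vs_def coef_def sp_def)
      also have "\<dots> = (s * s) * (s ^ k' * complex_of_real (sqrt (pis (Suc k')) * sqrt (q (Suc k'))))"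
        by (simp add: sqrt_balance ss)
      also have "\<dots> = s * vs s x" by (simp add: vs_def coef_def sq_def Pair False Suc algebra_simps)
      finally show ?thesis .
    qed
  qed
qed

lemma fix_unique:
  assumes s: "s = 1 \<or> s = -1" and fx: "\<And>x. Uloc d x = s * d x" and d0: "d (0, True) = 0"
  shows "d (k, True) = 0 \<and> (1 \<le> k \<longrightarrow> d (k, False) = 0)"
proof (induction k)
  case 0 then show ?case using d0 by simp
next
  case (Suc k)
  have s0: "s \<noteq> 0" using s by auto
  have cck: "cc d k = 0"
    using Suc by (cases k) (auto simp: cc_def)
  have e2: "Uloc d (Suc k, False) = 2 * cc d k * sp k - d (k, True)"
    by (simp add: Uloc_def sig_def Cf_def coef_def)
  then have "s * d (Suc k, False) = 0" using fx[of "(Suc k, False)"] cck Suc by simp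
  then have dF: "d (Suc k, False) = 0" using s0 by simp
  have e1: "Uloc d (k, True) = 2 * cc d (Suc k) * sq (Suc k) - d (Suc k, False)"
    by (simp add: Uloc_def sig_def Cf_def coef_def)
  then have "2 * cc d (Suc k) * sq (Suc k) = 0" using fx[of "(k, True)"] Suc dF by simp
  moreover have "sq (Suc k) \<noteq> 0" using qpos[of "Suc k"] by (simp add: sq_def)
  ultimately have "cc d (Suc k) = 0" by simp
  then have "sp (Suc k) * d (Suc k, True) = 0" by (simp add: cc_def dF)
  moreover have "sp (Suc k) \<noteq> 0" using ppos[of "Suc k"] by (simp add: sp_def)
  ultimately show ?case using dF by simp
qed

lemma eig_form:
  assumes s: "s = 1 \<or> s = -1" and fx: "\<And>x. Uloc z x = s * z x" and z0: "z (0, False) = 0"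
  shows "z x = (z (0, True) / complex_of_real (sqrt (pis 0))) * vs s x"
proof -
  define \<kappa> where "\<kappa> = z (0, True) / complex_of_real (sqrt (pis 0))"
  define d where "d x = z x - \<kappa> * vs s x" for x
  have sp0: "sqrt (pis 0) \<noteq> 0" using pis_pos[of 0] by simp
  have v0: "vs s (0, True) = complex_of_real (sqrt (pis 0))" by (simp add: vs_def coef_def)
  have "Uloc d x = s * d x" for x
  proof -
    have "Uloc d = (\<lambda>x. Uloc z x - \<kappa> * Uloc (vs s) x)"
      unfolding d_def[abs_def] Uloc_diff Uloc_scale by simp
    then show ?thesis by (simp add: fx Uloc_vs[OF s] d_def algebra_simps)
  qed
  moreover have "d (0, True) = 0" using sp0 by (simp add: d_def \<kappa>_def v0)
  ultimately have dz: "d (k, True) = 0 \<and> (1 \<le> k \<longrightarrow> d (k, False) = 0)" for k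
    using fix_unique[OF s] by blast
  have "d x = 0"
  proof (cases x)
    case (Pair k b) then show ?thesis
      using dz[of k] z0 by (cases b; cases k) (auto simp: d_def vs_def coef_def)
  qed
  then show ?thesis by (simp add: d_def \<kappa>_def)
qed


definition Wsg :: "real \<Rightarrow> arc l2 \<Rightarrow> arc l2" where "Wsg r v = r *\<^sub>R Uop v"

lemma Wsg_linear: "linear (Wsg r)"
  unfolding Wsg_def
  by (rule linearI) (simp_all add: linear_add[OF Uop_linear] linear_scale[OF Uop_linear] scaleR_add_right)

lemma Wsg_norm: "r = 1 \<or> r = -1 \<Longrightarrow> norm (Wsg r v) = norm v"
  by (auto simp: Wsg_def Uop_norm)

lemma Wsg_pow: "(Wsg r ^^ t) v = (r ^ t) *\<^sub>R (Uop ^^ t) v"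
  by (induction t) (simp_all add: Wsg_def linear_scale[OF Uop_linear])

lemma Uop_pow_ell2:
  assumes "is_ell2 \<Psi>0"
  shows "Rep_l2 ((Uop ^^ t) (Abs_l2 \<Psi>0)) = (evol p q ^^ t) \<Psi>0" and "Rep_l2 ((Uop ^^ t) (Abs_l2 \<Psi>0)) (0, False) = 0"
proof -
  from evol_pow[OF assms, of t] show "Rep_l2 ((Uop ^^ t) (Abs_l2 \<Psi>0)) = (evol p q ^^ t) \<Psi>0" by simp
  moreover have "(evol p q ^^ t) \<Psi>0 (0, False) = 0"
    using evol_pow[OF assms, of t] by (auto simp: is_ell2_def arcs_def)
  ultimately show "Rep_l2 ((Uop ^^ t) (Abs_l2 \<Psi>0)) (0, False) = 0" by simp
qed

lemma Re_lemma1: "Re (cnj v * (k * v)) = Re k * (cmod v)\<^sup>2"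
  unfolding cmod_power2 by (simp add: algebra_simps power2_eq_square)
lemma Re_lemma2: "Re (cnj (\<i> * v) * (k * v)) = Im k * (cmod v)\<^sup>2"
  unfolding cmod_power2 by (simp add: algebra_simps power2_eq_square)

lemma limit_part:
  assumes ell: "is_ell2 \<Psi>0" and r: "r = 1 \<or> r = -1"
    and supp: "\<forall>x. x \<notin> {x \<in> arcs. fst x = j} \<longrightarrow> \<Psi>0 x = 0"
  shows "(\<lambda>T. Rep_l2 (avg (Wsg r) T (Abs_l2 \<Psi>0)) x)
           \<longlonglongrightarrow> (complex_of_real r ^ j * complex_of_real (sqrt (pis j)) * cc \<Psi>0 j) * vs (complex_of_real r) x"
proof -
  define \<psi> where "\<psi> = Abs_l2 \<Psi>0"
  have Rpsi: "Rep_l2 \<psi> = \<Psi>0" unfolding \<psi>_def using ell by (simp add: Abs_l2_inverse is_ell2_sqsum)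
  define m where "m T = avg (Wsg r) T \<psi>" for T
  define s where "s = complex_of_real r"
  have s_sign: "s = 1 \<or> s = -1" using r by (auto simp: s_def)
  have ss: "s * s = 1" using s_sign by auto
  have rr: "r * r = 1" using r by auto
  have C: "Cauchy m"
    unfolding m_def[abs_def] avg_def by (rule mean_ergodic_cauchy[OF Wsg_linear Wsg_norm[OF r]])
  define z where "z x = lim (\<lambda>T. Rep_l2 (m T) x)" for x
  have zc: "(\<lambda>T. Rep_l2 (m T) x) \<longlonglongrightarrow> z x" for x unfolding z_def by (rule coord_conv[OF C])
  have fx: "Uloc z x = s * z x" for x
  proof -
    have h1: "(\<lambda>T. Rep_l2 (Wsg r (m T)) x - Rep_l2 (m T) x) \<longlonglongrightarrow> 0"
    proof -
      have b: "cmod (Rep_l2 (Wsg r (m T)) x - Rep_l2 (m T) x) \<le> 2 * norm \<psi> / real T" for T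
        using coord_le[of "Wsg r (m T) - m T" x] avg_shift[OF Wsg_linear Wsg_norm[OF r], of T \<psi>]
        by (simp add: m_def)
      have "(\<lambda>T. 2 * norm \<psi> / real T) \<longlonglongrightarrow> 0"
        by (intro tendsto_divide_0[OF tendsto_const] filterlim_at_top_imp_at_infinity[OF filterlim_real_sequentially])
      then show ?thesis by (rule Lim_null_comparison[rotated]) (simp add: b)
    qed
    have h2: "Rep_l2 (Wsg r (m T)) x = s * Uloc (Rep_l2 (m T)) x" for T
      by (simp add: Wsg_def Rep_Uop s_def)
    have h3: "(\<lambda>T. Uloc (Rep_l2 (m T)) x) \<longlonglongrightarrow> Uloc z x"
      unfolding Uloc_def Cf_def cc_def by (intro tendsto_intros zc)
    have "(\<lambda>T. s * Uloc (Rep_l2 (m T)) x - Rep_l2 (m T) x) \<longlonglongrightarrow> s * Uloc z x - z x"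
      by (intro tendsto_intros h3 zc)
    moreover have "(\<lambda>T. s * Uloc (Rep_l2 (m T)) x - Rep_l2 (m T) x) \<longlonglongrightarrow> 0"
      using h1 by (simp add: h2)
    ultimately have "s * Uloc z x - z x = 0" by (rule LIMSEQ_unique)
    then have "s * (s * Uloc z x) = s * z x" by simp
    then show ?thesis by (simp add: mult.assoc[symmetric] ss)
  qed
  have z0: "z (0, False) = 0"
  proof -
    have "Rep_l2 (m T) (0, False) = 0" for T
      by (simp add: m_def Rep_avg Wsg_pow \<psi>_def Uop_pow_ell2(2)[OF ell])
    then have "(\<lambda>T. Rep_l2 (m T) (0, False)) \<longlonglongrightarrow> 0" by simp
    then show ?thesis using zc LIMSEQ_unique by blast
  qed
  define \<kappa>' where "\<kappa>' = z (0, True) / complex_of_real (sqrt (pis 0))"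
  have zf: "z x = \<kappa>' * vs s x" for x unfolding \<kappa>'_def by (rule eig_form[OF s_sign fx z0])
  define \<kappa> where "\<kappa> = s ^ j * complex_of_real (sqrt (pis j)) * cc \<Psi>0 j"
  have vsq: "sqsum (vs s)" by (rule vs_sqsum(1)[OF s_sign])
  have vsn: "infsum (\<lambda>x. (cmod (vs s x))\<^sup>2) UNIV = 1" by (rule vs_sqsum(2)[OF s_sign])
  define V' where "V' = Abs_l2 (\<lambda>x. \<kappa>' * vs s x)"
  have RV': "Rep_l2 V' = z" unfolding V'_def using zf by (simp add: Abs_l2_inverse sqsum_scale vsq fun_eq_iff)
  have mV: "m \<longlonglongrightarrow> V'"
  proof (rule LIMSEQ_I)
    fix e :: real assume e: "0 < e"
    obtain M where M: "\<forall>T\<ge>M. \<forall>S\<ge>M. norm (m T - m S) < e / 2"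
      using C e unfolding Cauchy_iff by (meson half_gt_zero)
    have "norm (m T - V') \<le> e / 2" if T: "T \<ge> M" for T
    proof -
      have "(norm (m T - V'))\<^sup>2 \<le> (e / 2)\<^sup>2"
      proof -
        have "(norm (m T - V'))\<^sup>2 = infsum (\<lambda>x. (cmod (Rep_l2 (m T - V') x))\<^sup>2) UNIV" by (rule norm_l2_sq)
        also have "\<dots> \<le> (e / 2)\<^sup>2"
        proof (rule infsum_le_finite_sums)
          show "(\<lambda>x. (cmod (Rep_l2 (m T - V') x))\<^sup>2) summable_on UNIV"
            using Rep_sq[of "m T - V'"] unfolding sqsum_def .
          fix F :: "arc set" assume F: "finite F" "F \<subseteq> UNIV"
          have lim1: "(\<lambda>S. \<Sum>x\<in>F. (cmod (Rep_l2 (m T) x - Rep_l2 (m S) x))\<^sup>2) \<longlonglongrightarrow> (\<Sum>x\<in>F. (cmod (Rep_l2 (m T) x - z x))\<^sup>2)"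
            by (intro tendsto_intros zc)
          have bnd: "(\<Sum>x\<in>F. (cmod (Rep_l2 (m T) x - Rep_l2 (m S) x))\<^sup>2) \<le> (e / 2)\<^sup>2" if S: "S \<ge> M" for S
          proof -
            have "(\<Sum>x\<in>F. (cmod (Rep_l2 (m T) x - Rep_l2 (m S) x))\<^sup>2) = (\<Sum>x\<in>F. (cmod (Rep_l2 (m T - m S) x))\<^sup>2)" by simp
            also have "\<dots> \<le> infsum (\<lambda>x. (cmod (Rep_l2 (m T - m S) x))\<^sup>2) UNIV"
              using F Rep_sq[of "m T - m S"] by (intro finite_sum_le_infsum) (auto simp: sqsum_def)
            also have "\<dots> = (norm (m T - m S))\<^sup>2" by (rule norm_l2_sq[symmetric])
            also have "\<dots> \<le> (e / 2)\<^sup>2" using M T S by (intro power_mono) (auto simp: less_imp_le)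
            finally show ?thesis .
          qed
          have "(\<Sum>x\<in>F. (cmod (Rep_l2 (m T) x - z x))\<^sup>2) \<le> (e / 2)\<^sup>2"
            by (rule Lim_bounded[OF lim1, of M]) (use bnd in auto)
          then show "(\<Sum>x\<in>F. (cmod (Rep_l2 (m T - V') x))\<^sup>2) \<le> (e / 2)\<^sup>2" by (simp add: RV')
        qed
        finally show ?thesis .
      qed
      then show ?thesis using e by (simp add: power2_le_iff_abs_le)
    qed
    moreover have "e / 2 < e" using e by simp
    ultimately show "\<exists>no. \<forall>n\<ge>no. norm (m n - V') < e" by (meson le_less_trans)
  qed
  have inv: "a \<bullet> V' = a \<bullet> \<psi>" if Wa: "Wsg r a = a" for a
  proof -
    have pw: "a \<bullet> (Wsg r ^^ t) \<psi> = a \<bullet> \<psi>" for t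
    proof (induction t)
      case (Suc t)
      have "a \<bullet> (Wsg r ^^ Suc t) \<psi> = Wsg r a \<bullet> Wsg r ((Wsg r ^^ t) \<psi>)" by (simp add: Wa)
      also have "\<dots> = a \<bullet> (Wsg r ^^ t) \<psi>" by (rule iso_inner[OF Wsg_linear Wsg_norm[OF r]])
      finally show ?case using Suc by simp
    qed simp
    have cst: "a \<bullet> m (Suc T) = a \<bullet> \<psi>" for T
    proof -
      have "a \<bullet> m (Suc T) = (1 / real (Suc T)) * (\<Sum>t<Suc T. a \<bullet> (Wsg r ^^ t) \<psi>)"
        by (simp only: m_def avg_def inner_scaleR_right inner_sum_right)
      also have "\<dots> = a \<bullet> \<psi>" by (simp only: pw sum_constant) (simp del: of_nat_Suc)
      finally show ?thesis .
    qed
    have "(\<lambda>T. a \<bullet> m T) \<longlonglongrightarrow> a \<bullet> V'" by (intro tendsto_intros mV)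
    then have "(\<lambda>T. a \<bullet> m (Suc T)) \<longlonglongrightarrow> a \<bullet> V'" by (rule LIMSEQ_Suc)
    then show ?thesis unfolding cst using LIMSEQ_unique tendsto_const by blast
  qed
  define a0 where "a0 = Abs_l2 (vs s)"
  define a1 where "a1 = Abs_l2 (\<lambda>x. \<i> * vs s x)"
  have Ra0: "Rep_l2 a0 = vs s" unfolding a0_def using vsq by (simp add: Abs_l2_inverse)
  have Ra1: "Rep_l2 a1 = (\<lambda>x. \<i> * vs s x)" unfolding a1_def using vsq by (simp add: Abs_l2_inverse sqsum_scale)
  have W0: "Wsg r a0 = a0"
    by (rule l2_eqI) (simp add: Wsg_def Rep_Uop Ra0 Uloc_vs[OF s_sign] s_def[symmetric] mult.assoc[symmetric] ss)
  have W1: "Wsg r a1 = a1"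
    by (rule l2_eqI) (simp add: Wsg_def Rep_Uop Ra1 Uloc_scale_pt Uloc_vs[OF s_sign] s_def[symmetric] ss algebra_simps)
  have lhs0: "a0 \<bullet> V' = Re \<kappa>'"
    unfolding inner_l2_def Ra0 RV' zf Re_lemma1 using vsn by (simp add: infsum_cmult_right')
  have lhs1: "a1 \<bullet> V' = Im \<kappa>'"
    unfolding inner_l2_def Ra1 RV' zf Re_lemma2 using vsn by (simp add: infsum_cmult_right')
  have cvs: "cnj (vs s y) = vs s y" for y using s_sign by (auto simp: vs_def)
  have supp2: "\<Psi>0 x = 0" if "x \<notin> {(j, True), (j, False)}" for x
  proof -
    have "fst x \<noteq> j" using that by (cases x) auto
    then have "x \<notin> {x \<in> arcs. fst x = j}" by simp
    then show ?thesis using supp by blast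
  qed
  have kap: "\<kappa> = vs s (j, True) * \<Psi>0 (j, True) + vs s (j, False) * \<Psi>0 (j, False)"
    by (simp add: \<kappa>_def vs_def coef_def cc_def algebra_simps)
  have rhs0: "a0 \<bullet> \<psi> = Re \<kappa>"
  proof -
    have "a0 \<bullet> \<psi> = (\<Sum>x\<in>{(j, True), (j, False)}. Re (cnj (vs s x) * \<Psi>0 x))"
      unfolding inner_l2_def Ra0 Rpsi by (rule fin_supp_summable(2)) (auto simp: supp2)
    then show ?thesis by (simp add: kap cvs)
  qed
  have rhs1: "a1 \<bullet> \<psi> = Im \<kappa>"
  proof -
    have "a1 \<bullet> \<psi> = (\<Sum>x\<in>{(j, True), (j, False)}. Re (cnj (\<i> * vs s x) * \<Psi>0 x))"
      unfolding inner_l2_def Ra1 Rpsi by (rule fin_supp_summable(2)) (auto simp: supp2)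
    then show ?thesis by (simp add: kap cvs)
  qed
  have "\<kappa>' = \<kappa>"
    using inv[OF W0] inv[OF W1] lhs0 lhs1 rhs0 rhs1 by (simp add: complex_eq_iff)
  then show ?thesis using zc[of x] zf[of x] by (simp add: m_def \<psi>_def \<kappa>_def s_def)
qed


lemma main:
  assumes ell: "is_ell2 \<Psi>0" and nrm: "l2norm \<Psi>0 = 1"
    and supp: "\<forall>x. x \<notin> {x \<in> arcs. fst x = j} \<longrightarrow> \<Psi>0 x = 0"
  shows "convergent (cesaro_avg p q \<Psi>0 i) \<and>
         lim (cesaro_avg p q \<Psi>0 i) \<ge> 2 * (cmod (l2inner (avec p q j) \<Psi>0))\<^sup>2 * pi_stat p q i * pi_stat p q j"
proof -
  define \<psi> where "\<psi> = Abs_l2 \<Psi>0"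
  have sq0: "sqsum \<Psi>0" using ell by (simp add: is_ell2_sqsum)
  have npsi: "norm \<psi> = 1" using nrm l2norm_Abs[OF sq0] by (simp add: \<psi>_def)
  define E where "E = {x \<in> arcs. fst x = i}"
  have fE: "finite E" by (rule finite_subset[of E "{(i, True), (i, False)}"]) (auto simp: E_def)
  define P where "P t x = Rep_l2 ((Uop ^^ t) \<psi>) x" for t x
  have prob: "prob_at p q \<Psi>0 t i = (\<Sum>x\<in>E. (cmod (P t x))\<^sup>2)" for t
    unfolding prob_at_def Let_def E_def P_def \<psi>_def Uop_pow_ell2(1)[OF ell] by simp
  define c where "c x T = (1 / real T) * (\<Sum>t<T. (cmod (P t x))\<^sup>2)" for x T
  have ces: "cesaro_avg p q \<Psi>0 i T = (\<Sum>x\<in>E. c x T)" for T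
    unfolding cesaro_avg_def prob c_def by (simp add: sum.swap[of _ E] sum_distrib_left)
  have cconv: "c x \<longlonglongrightarrow> lim (c x)" for x
  proof -
    have C: "Cauchy (\<lambda>T. avg Wop T (Tl \<psi>))"
      unfolding avg_def by (rule mean_ergodic_cauchy[OF Wop_linear Wop_norm])
    have e: "Rep_l2 (avg Wop T (Tl \<psi>)) (x, x) = complex_of_real (c x T)" for T
      by (simp add: Rep_avg Wop_pow_Tl Rep_Tl tens_def c_def P_def complex_mult_cnj cmod_power2)
    have "convergent (\<lambda>T. Rep_l2 (avg Wop T (Tl \<psi>)) (x, x))"
      using coord_cauchy[OF C] Cauchy_convergent_iff by blast
    then obtain L where "(\<lambda>T. complex_of_real (c x T)) \<longlonglongrightarrow> L"
      by (auto simp: convergent_def e)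
    then have "(\<lambda>T. Re (complex_of_real (c x T))) \<longlonglongrightarrow> Re L" by (rule tendsto_Re)
    then have "convergent (c x)" by (auto simp: convergent_def)
    then show ?thesis by (simp add: convergent_LIMSEQ_iff)
  qed
  have climit: "cesaro_avg p q \<Psi>0 i \<longlonglongrightarrow> (\<Sum>x\<in>E. lim (c x))"
    unfolding ces[abs_def] by (intro tendsto_sum cconv)
  then have conv: "convergent (cesaro_avg p q \<Psi>0 i)" by (auto simp: convergent_def)
  have limeq: "lim (cesaro_avg p q \<Psi>0 i) = (\<Sum>x\<in>E. lim (c x))" using climit by (rule limI)
  define k where "k r = complex_of_real r ^ j * complex_of_real (sqrt (pis j)) * cc \<Psi>0 j" for r :: real
  define A where "A r T = (\<Sum>x\<in>E. (cmod (Rep_l2 (avg (Wsg r) T \<psi>) x))\<^sup>2)" for r T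
  have Alim: "A r \<longlonglongrightarrow> (\<Sum>x\<in>E. (cmod (k r * vs (complex_of_real r) x))\<^sup>2)" if r: "r = 1 \<or> r = -1" for r
    unfolding A_def[abs_def] k_def \<psi>_def by (intro tendsto_intros limit_part[OF ell r supp])
  have Aval: "(\<Sum>x\<in>E. (cmod (k r * vs (complex_of_real r) x))\<^sup>2) = pis j * (cmod (cc \<Psi>0 j))\<^sup>2 * pis i"
    if r: "r = 1 \<or> r = -1" for r
  proof -
    have rs: "complex_of_real r = 1 \<or> complex_of_real r = -1" using r by auto
    have "(\<Sum>x\<in>E. (cmod (k r * vs (complex_of_real r) x))\<^sup>2)
        = (cmod (k r))\<^sup>2 * ((cmod (vs (complex_of_real r) (i, True)))\<^sup>2 + (cmod (vs (complex_of_real r) (i, False)))\<^sup>2)"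
      unfolding E_def by (subst sum_E) (simp_all add: vs_def coef_def norm_mult power_mult_distrib distrib_left)
    also have "\<dots> = (cmod (k r))\<^sup>2 * pis i" by (simp add: vs_block[OF rs])
    also have "(cmod (k r))\<^sup>2 = pis j * (cmod (cc \<Psi>0 j))\<^sup>2"
      using cmod_pow_sign[OF rs, of j] pis_pos[of j]
      by (simp add: k_def norm_mult power_mult_distrib less_imp_le)
    finally show ?thesis .
  qed
  have ineq: "A 1 T + A (-1) T \<le> cesaro_avg p q \<Psi>0 i T + 2 / real T" if T: "T \<ge> 1" for T
  proof -
    define u where "u t = Abs_l2 (\<lambda>x. if x \<in> E then P t x else 0)" for t
    have Ru: "Rep_l2 (u t) = (\<lambda>x. if x \<in> E then P t x else 0)" for t
      unfolding u_def by (rule Rep_restr[OF fE])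
    define m where "m = (1 / real T) *\<^sub>R (\<Sum>t<T. u t)"
    define n where "n = (1 / real T) *\<^sub>R (\<Sum>t<T. ((-1) ^ t) *\<^sub>R u t)"
    have Rm: "Rep_l2 m x = (if x \<in> E then Rep_l2 (avg (Wsg 1) T \<psi>) x else 0)" for x
      by (simp add: m_def Rep_sum Ru Rep_avg Wsg_pow P_def)
    have Rn: "Rep_l2 n x = (if x \<in> E then Rep_l2 (avg (Wsg (-1)) T \<psi>) x else 0)" for x
      by (simp add: n_def Rep_sum Ru Rep_avg Wsg_pow P_def)
    have nm: "(norm m)\<^sup>2 = A 1 T"
      unfolding A_def by (subst norm_restr[OF fE]) (simp_all add: Rm)
    have nn: "(norm n)\<^sup>2 = A (-1) T"
      unfolding A_def by (subst norm_restr[OF fE]) (simp_all add: Rn)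
    have nu: "(norm (u t))\<^sup>2 = prob_at p q \<Psi>0 t i" for t
      unfolding prob by (subst norm_restr[OF fE]) (simp_all add: Ru)
    have m1: "norm m \<le> 1"
      using norm_restr_le[OF fE Rm] avg_norm[of "Wsg 1" T \<psi>] npsi by (simp add: Wsg_norm)
    have n1: "norm n \<le> 1"
      using norm_restr_le[OF fE Rn] avg_norm[of "Wsg (-1)" T \<psi>] npsi by (simp add: Wsg_norm)
    have mn: "\<bar>m \<bullet> n\<bar> \<le> 1"
      using Cauchy_Schwarz_ineq2[of m n] m1 n1 mult_mono[of "norm m" 1 "norm n" 1] by simp
    have J: "(norm m)\<^sup>2 + (norm n)\<^sup>2 \<le> (1 / real T) * (\<Sum>t<T. (norm (u t))\<^sup>2) + 2 * \<bar>m \<bullet> n\<bar> / real T"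
      unfolding m_def n_def by (rule jensen2) (use T in simp)
    have "2 * \<bar>m \<bullet> n\<bar> / real T \<le> 2 / real T"
      using mn T by (simp add: divide_right_mono)
    then show ?thesis using J unfolding nm nn nu cesaro_avg_def by linarith
  qed
  have "(\<lambda>T. A 1 T + A (-1) T) \<longlonglongrightarrow> pis j * (cmod (cc \<Psi>0 j))\<^sup>2 * pis i + pis j * (cmod (cc \<Psi>0 j))\<^sup>2 * pis i"
    using tendsto_add[OF Alim[of 1] Alim[of "-1"]] Aval[of 1] Aval[of "-1"] by simp
  moreover have "(\<lambda>T. cesaro_avg p q \<Psi>0 i T + 2 / real T) \<longlonglongrightarrow> lim (cesaro_avg p q \<Psi>0 i) + 0"
    by (intro tendsto_add convergent_LIMSEQ_iff[THEN iffD1, OF conv]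
        tendsto_divide_0[OF tendsto_const] filterlim_at_top_imp_at_infinity[OF filterlim_real_sequentially])
  ultimately have "pis j * (cmod (cc \<Psi>0 j))\<^sup>2 * pis i + pis j * (cmod (cc \<Psi>0 j))\<^sup>2 * pis i \<le> lim (cesaro_avg p q \<Psi>0 i) + 0"
    by (rule LIMSEQ_le) (use ineq in auto)
  then show ?thesis using conv by (simp add: l2inner_avec pis_def algebra_simps)
qed

end

theorem corollary1:
  fixes p q :: "nat \<Rightarrow> real"
  assumes nonneg: "\<And>j. p j \<ge> 0" "\<And>j. q j \<ge> 0"
    and no_loops: "\<And>j. p j + q j = 1"
    and q0: "q 0 = 0"
    and ppos: "\<And>j. p j > 0"
    and qpos: "\<And>j. 1 \<le> j \<Longrightarrow> q j > 0"
    and pos_rec: "summable (\<lambda>j. wgt p q (Suc j))"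
  shows "\<forall>j::nat. \<forall>\<Psi>0::qstate. \<forall>i::nat.
           is_ell2 \<Psi>0 \<and> l2norm \<Psi>0 = 1 \<and>
           (\<forall>x. x \<notin> {x \<in> arcs. fst x = j} \<longrightarrow> \<Psi>0 x = 0)
           \<longrightarrow> convergent (cesaro_avg p q \<Psi>0 i) \<and>
               lim (cesaro_avg p q \<Psi>0 i)
                 \<ge> 2 * (cmod (l2inner (avec p q j) \<Psi>0))\<^sup>2 * pi_stat p q i * pi_stat p q j"
proof -
  interpret walk p q
    by unfold_locales (use assms in auto)
  show ?thesis using main by blast
qed

end
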